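(* For any $\mathcal{E}\in(0,1)$, any $c\in\mathbb{R}$, and any real $u\in H^2(\mathbb{R})$ such that $u(x)=0$ whenever $u_0'(x)=0$, we have $$\langle K_+(c)u,u\rangle_{L^2}=\|w_x\|^2_{L^2}+(3-c)\|w\|^2_{L^2}+2\mathcal{E}^2\Big\|\frac{u_0w}{u_0'}\Big\|^2_{L^2},$$ where $w=u_x-\frac{u_0''}{u_0'}u\in H^1(\mathbb{R})$ satisfies $\frac{w}{u_0'}\in L^2(\mathbb{R})$.
   Context: For $\mathcal{E}\in(0,1)$, $u_0(x)=\sqrt{1-\mathcal{E}}\,\mathrm{sn}\big(x\sqrt{(1+\mathcal{E})/2},\,k\big)$ with $k=\sqrt{(1-\mathcal{E})/(1+\mathcal{E})}$ (Jacobi elliptic function of modulus $k$); it satisfies $u_0''+(1-u_0^2)u_0=0$ and $(u_0')^2=\frac12[(1-u_0^2)^2-\mathcal{E}^2]$. Define $L_+u=-u''+(3u_0^2-1)u$, $M_+u=u''''-5(u_0^2u')'+(-5u_0^4+15u_0^2-4+3\mathcal{E}^2)u$, $K_+(c)=M_+-cL_+$, with quadratic form $\langle K_+(c)u,u\rangle_{L^2}=\int[u_{xx}^2+5u_0^2u_x^2+(-5u_0^4+15u_0^2-4+3\mathcal{E}^2)u^2]-c\int[u_x^2+(3u_0^2-1)u^2]$ on $H^2(\mathbb{R})$. *)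

theory Defs
  imports "HOL-Analysis.Analysis"
begin

definition sint :: "(real \<Rightarrow> real) \<Rightarrow> real \<Rightarrow> real \<Rightarrow> real" where
  "sint f a b = (if a \<le> b then integral {a..b} f else - integral {b..a} f)"

definition ellipticF :: "real \<Rightarrow> real \<Rightarrow> real" where
  "ellipticF k phi = sint (\<lambda>\<theta>. 1 / sqrt (1 - k\<^sup>2 * (sin \<theta>)\<^sup>2)) 0 phi"

definition jacobi_am :: "real \<Rightarrow> real \<Rightarrow> real" where
  "jacobi_am k x = (THE phi. ellipticF k phi = x)"

definition jacobi_sn :: "real \<Rightarrow> real \<Rightarrow> real" where
  "jacobi_sn k x = sin (jacobi_am k x)"

definition u0 :: "real \<Rightarrow> real \<Rightarrow> real" where
  "u0 E x = sqrt (1 - E) * jacobi_sn (sqrt ((1 - E) / (1 + E))) (x * sqrt ((1 + E) / 2))"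

definition square_integrable :: "(real \<Rightarrow> real) \<Rightarrow> bool" where
  "square_integrable f \<longleftrightarrow> f measurable_on UNIV \<and> (\<lambda>x. (f x)\<^sup>2) integrable_on UNIV"

text \<open>w is (the continuous representative of) an H1 function with weak derivative w1.\<close>
definition H1_with_deriv :: "(real \<Rightarrow> real) \<Rightarrow> (real \<Rightarrow> real) \<Rightarrow> bool" where
  "H1_with_deriv w w1 \<longleftrightarrow> continuous_on UNIV w
     \<and> (\<forall>a b. a \<le> b \<longrightarrow> (w1 has_integral (w b - w a)) {a..b})
     \<and> square_integrable w \<and> square_integrable w1"

text \<open>u is (the C1 representative of) an H2 function with derivative u1 and
  weak second derivative u2.\<close>
definition H2_with_derivs :: "(real \<Rightarrow> real) \<Rightarrow> (real \<Rightarrow> real) \<Rightarrow> (real \<Rightarrow> real) \<Rightarrow> bool" where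
  "H2_with_derivs u u1 u2 \<longleftrightarrow> (\<forall>x. (u has_real_derivative u1 x) (at x))
     \<and> square_integrable u \<and> H1_with_deriv u1 u2"

text \<open>The quadratic form of K+(c) = M+ - c L+.\<close>
definition Kplus_form :: "real \<Rightarrow> real \<Rightarrow> (real \<Rightarrow> real) \<Rightarrow> (real \<Rightarrow> real) \<Rightarrow> (real \<Rightarrow> real) \<Rightarrow> real" where
  "Kplus_form E c u u1 u2 =
     integral UNIV (\<lambda>x. (u2 x)\<^sup>2 + 5 * (u0 E x)\<^sup>2 * (u1 x)\<^sup>2
        + (- 5 * (u0 E x)^4 + 15 * (u0 E x)\<^sup>2 - 4 + 3 * E\<^sup>2) * (u x)\<^sup>2)
     - c * integral UNIV (\<lambda>x. (u1 x)\<^sup>2 + (3 * (u0 E x)\<^sup>2 - 1) * (u x)\<^sup>2)"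

end

theory Submission
  imports Defs
begin


lemma sint_deriv:
  fixes f :: "real \<Rightarrow> real"
  assumes cf: "continuous_on UNIV f"
  shows "((\<lambda>y. sint f 0 y) has_real_derivative f x) (at x)"
proof -
  define R where "R = \<bar>x\<bar> + 1"
  define G where "G y = integral {-R..y} f" for y
  have R: "R > 0" "-R < x" "x < R" unfolding R_def by auto
  have int: "f integrable_on {c..d}" for c d
    by (rule integrable_continuous_real) (rule continuous_on_subset[OF cf], auto)
  have eq: "sint f 0 y = G y - G 0" if "-R \<le> y" for y
  proof (cases "0 \<le> y")
    case True
    have "integral {-R..0} f + integral {0..y} f = integral {-R..y} f"
      by (rule Henstock_Kurzweil_Integration.integral_combine) (use True R in \<open>auto intro: int\<close>)
    then show ?thesis using True unfolding sint_def G_def by auto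
  next
    case False
    have "integral {-R..y} f + integral {y..0} f = integral {-R..0} f"
      by (rule Henstock_Kurzweil_Integration.integral_combine) (use False that in \<open>auto intro: int\<close>)
    then show ?thesis using False unfolding sint_def G_def by auto
  qed
  have "(G has_real_derivative f x) (at x within {-R..R})"
    unfolding G_def
    by (rule integral_has_real_derivative) (use R in \<open>auto intro: continuous_on_subset[OF cf]\<close>)
  then have "(G has_real_derivative f x) (at x)"
    using R by (subst (asm) at_within_interior[of x]) auto
  then have d: "((\<lambda>y. G y - G 0) has_real_derivative f x) (at x)"
    by (auto intro!: derivative_eq_intros)
  show ?thesis
  proof (rule has_field_derivative_transform_within_open[OF d, of "{-R<..}"])
    show "\<And>z. z \<in> {-R<..} \<Longrightarrow> G z - G 0 = sint f 0 z" using eq by auto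
  qed (use R in auto)
qed

locale ell =
  fixes E :: real
  assumes E0: "0 < E" and E1: "E < 1"
begin

definition "k = sqrt ((1 - E) / (1 + E))"
definition "s = sqrt ((1 + E) / 2)"
definition "A = sqrt (1 - E)"
definition "g \<theta> = sqrt (1 - k\<^sup>2 * (sin \<theta>)\<^sup>2)"

lemma k2: "k\<^sup>2 = (1 - E) / (1 + E)" unfolding k_def using E0 E1 by simp
lemma s2: "s\<^sup>2 = (1 + E) / 2" unfolding s_def using E0 E1 by simp
lemma A2: "A\<^sup>2 = 1 - E" unfolding A_def using E0 E1 by simp
lemma s_pos: "s > 0" unfolding s_def using E0 by simp
lemma A_pos: "A > 0" unfolding A_def using E1 by simp
lemma k2_lt1: "k\<^sup>2 < 1" unfolding k2 using E0 E1 by (simp add: field_simps)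
lemma k2_ge0: "k\<^sup>2 \<ge> 0" by simp

lemma g_arg_pos: "1 - k\<^sup>2 * (sin \<theta>)\<^sup>2 > 0"
proof -
  have "k\<^sup>2 * (sin \<theta>)\<^sup>2 \<le> k\<^sup>2 * 1"
    by (rule mult_left_mono) (auto simp: abs_square_le_1)
  then show ?thesis using k2_lt1 by linarith
qed

lemma g_pos: "g \<theta> > 0" unfolding g_def using g_arg_pos by simp
lemma g2: "(g \<theta>)\<^sup>2 = 1 - k\<^sup>2 * (sin \<theta>)\<^sup>2" unfolding g_def using g_arg_pos[of \<theta>] by simp
lemma g_le1: "g \<theta> \<le> 1" unfolding g_def by (simp add: real_sqrt_le_1_iff)

definition "EF \<phi> = ellipticF k \<phi>"

lemma cont_integrand: "continuous_on UNIV (\<lambda>\<theta>. 1 / sqrt (1 - k\<^sup>2 * (sin \<theta>)\<^sup>2))"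
proof -
  have ne: "\<And>\<theta>. sqrt (1 - k\<^sup>2 * (sin \<theta>)\<^sup>2) \<noteq> 0"
    using g_arg_pos by (metis less_irrefl real_sqrt_eq_zero_cancel_iff)
  show ?thesis by (intro continuous_intros) (use ne in auto)
qed

lemma EF_deriv: "(EF has_real_derivative 1 / g \<phi>) (at \<phi>)"
  unfolding EF_def ellipticF_def g_def
  using sint_deriv[OF cont_integrand] .

lemma EF_cont: "isCont EF \<phi>"
  using EF_deriv DERIV_isCont by blast

lemma EF_0: "EF 0 = 0" unfolding EF_def ellipticF_def sint_def by simp

lemma EF_strict_mono: "x < y \<Longrightarrow> EF x < EF y"
proof -
  assume xy: "x < y"
  have "\<forall>t. x \<le> t \<and> t \<le> y \<longrightarrow> (\<exists>d. (EF has_real_derivative d) (at t) \<and> 0 < d)"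
  proof (intro allI impI)
    fix t show "\<exists>d. (EF has_real_derivative d) (at t) \<and> 0 < d"
      using EF_deriv[of t] g_pos[of t] by (intro exI[of _ "1 / g t"]) auto
  qed
  then show ?thesis by (intro DERIV_pos_imp_increasing[OF xy]) blast
qed

lemma EF_mono: "x \<le> y \<Longrightarrow> EF x \<le> EF y"
  using EF_strict_mono by (cases "x = y") (auto simp: less_imp_le)

lemma EF_minus_id_mono: "x \<le> y \<Longrightarrow> EF x - x \<le> EF y - y"
proof -
  assume xy: "x \<le> y"
  have "\<forall>t. x \<le> t \<and> t \<le> y \<longrightarrow> (\<exists>d. ((\<lambda>t. EF t - t) has_real_derivative d) (at t) \<and> 0 \<le> d)"
  proof (intro allI impI exI conjI)
    fix t show "((\<lambda>t. EF t - t) has_real_derivative 1 / g t - 1) (at t)"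
      by (auto intro!: derivative_eq_intros EF_deriv)
    show "0 \<le> 1 / g t - 1" using g_pos[of t] g_le1[of t] by (simp add: field_simps)
  qed
  then show ?thesis by (intro DERIV_nonneg_imp_nondecreasing[OF xy]) blast
qed

lemma EF_ge: "0 \<le> \<phi> \<Longrightarrow> \<phi> \<le> EF \<phi>"
  using EF_minus_id_mono[of 0 \<phi>] EF_0 by simp
lemma EF_le: "\<phi> \<le> 0 \<Longrightarrow> EF \<phi> \<le> \<phi>"
  using EF_minus_id_mono[of \<phi> 0] EF_0 by simp

lemma EF_surj: "\<exists>\<phi>. EF \<phi> = x"
proof (cases "0 \<le> x")
  case True
  have "\<exists>t\<ge>0. t \<le> x \<and> EF t = x"
    by (rule IVT) (use True EF_0 EF_ge[OF True] EF_cont in auto)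
  then show ?thesis by auto
next
  case False
  have "\<exists>t\<ge>x. t \<le> 0 \<and> EF t = x"
    by (rule IVT) (use False EF_0 EF_le[of x] EF_cont in auto)
  then show ?thesis by auto
qed

lemma EF_inj: "EF x = EF y \<Longrightarrow> x = y"
  using EF_strict_mono by (metis linorder_neqE_linordered_idom order_less_irrefl)

definition "am x = jacobi_am k x"

lemma EF_am: "EF (am x) = x"
proof -
  have "\<exists>!\<phi>. EF \<phi> = x" using EF_surj EF_inj by blast
  then have "\<exists>!\<phi>. ellipticF k \<phi> = x" unfolding EF_def .
  then have "ellipticF k (THE \<phi>. ellipticF k \<phi> = x) = x" by (rule theI')
  then show ?thesis unfolding am_def jacobi_am_def EF_def .
qed

lemma am_EF: "am (EF \<phi>) = \<phi>"
  using EF_am[of "EF \<phi>"] EF_inj by blast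

lemma am_cont: "isCont am x"
proof -
  have "isCont am (EF (am x))"
    by (rule isCont_inverse_function2[of "am x - 1" "am x" "am x + 1"])
       (auto simp: am_EF EF_cont)
  then show ?thesis by (simp add: EF_am)
qed

lemma am_deriv: "(am has_real_derivative g (am x)) (at x)"
proof -
  have "(am has_real_derivative inverse (1 / g (am x))) (at x)"
    by (rule DERIV_inverse_function[where f=EF and g=am and a="x - 1" and b="x + 1"])
       (use EF_deriv g_pos[of "am x"] am_cont EF_am in auto)
  then show ?thesis by simp
qed

lemma am_strict_mono: "x < y \<Longrightarrow> am x < am y"
  by (metis EF_am EF_mono not_le order_less_irrefl order_le_less_trans)

end


context ell
begin

definition "ph x = am (x * s)"
definition "p x = A * s * (cos (ph x) * g (ph x))"
definition "pp x = - (1 - (u0 E x)\<^sup>2) * u0 E x"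

lemma ph_deriv: "(ph has_real_derivative g (ph x) * s) (at x)"
proof -
  have "((\<lambda>x. am (x * s)) has_real_derivative g (am (x * s)) * s) (at x)"
    by (rule DERIV_chain2[OF am_deriv]) (auto intro!: derivative_eq_intros)
  then show ?thesis unfolding ph_def .
qed

lemma u0_fun: "u0 E = (\<lambda>x. A * sin (ph x))"
  unfolding u0_def jacobi_sn_def ph_def am_def A_def k_def s_def by (rule ext) simp

lemma sin_ph_deriv: "((\<lambda>x. sin (ph x)) has_real_derivative cos (ph x) * (g (ph x) * s)) (at x)"
  by (rule DERIV_chain2[OF DERIV_sin ph_deriv])
lemma cos_ph_deriv: "((\<lambda>x. cos (ph x)) has_real_derivative - sin (ph x) * (g (ph x) * s)) (at x)"
  by (rule DERIV_chain2[OF DERIV_cos ph_deriv])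

lemma g_fun: "(\<lambda>x. g (ph x)) = (\<lambda>x. sqrt (1 - k\<^sup>2 * (sin (ph x) * sin (ph x))))"
  unfolding g_def by (simp add: power2_eq_square)

lemma g_ph_deriv: "((\<lambda>x. g (ph x)) has_real_derivative - (k\<^sup>2 * sin (ph x) * cos (ph x) * s)) (at x)"
proof -
  note q2 = DERIV_mult[OF sin_ph_deriv sin_ph_deriv]
  note q = DERIV_diff[OF DERIV_const[of 1] DERIV_cmult[OF q2, of "k\<^sup>2"]]
  have pos: "0 < 1 - k\<^sup>2 * (sin (ph x) * sin (ph x))" using g_arg_pos[of "ph x"] by (simp add: power2_eq_square)
  note r = DERIV_chain2[OF DERIV_real_sqrt[OF pos] q]
  show ?thesis unfolding g_fun
  proof (rule DERIV_cong[OF r])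
    have "sqrt (1 - k\<^sup>2 * (sin (ph x) * sin (ph x))) = g (ph x)" unfolding g_def by (simp add: power2_eq_square)
    then show "inverse (sqrt (1 - k\<^sup>2 * (sin (ph x) * sin (ph x)))) / 2 *
      (0 - k\<^sup>2 * (cos (ph x) * (g (ph x) * s) * sin (ph x) + cos (ph x) * (g (ph x) * s) * sin (ph x)))
      = - (k\<^sup>2 * sin (ph x) * cos (ph x) * s)"
      using g_pos[of "ph x"] by (simp add: field_simps)
  qed
qed

lemma u0_deriv: "(u0 E has_real_derivative p x) (at x)"
proof -
  have "((\<lambda>x. A * sin (ph x)) has_real_derivative A * (cos (ph x) * (g (ph x) * s))) (at x)"
    by (rule DERIV_cmult[OF sin_ph_deriv])
  then show ?thesis unfolding u0_fun p_def by (simp add: algebra_simps)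
qed

lemma s2k2: "s\<^sup>2 * (1 + k\<^sup>2) = 1" and s2k2': "2 * s\<^sup>2 * k\<^sup>2 = A\<^sup>2"
  unfolding s2 k2 A2 using E0 E1 by (simp_all add: field_simps)

lemma p_deriv: "(p has_real_derivative pp x) (at x)"
proof -
  note d = DERIV_cmult[OF DERIV_mult[OF cos_ph_deriv g_ph_deriv], of "A * s"]
  have "A * s * (- sin (ph x) * (g (ph x) * s) * g (ph x) + - (k\<^sup>2 * sin (ph x) * cos (ph x) * s) * cos (ph x))
      = - A * s\<^sup>2 * sin (ph x) * ((g (ph x))\<^sup>2 + k\<^sup>2 * (cos (ph x))\<^sup>2)"
    by (simp add: power2_eq_square algebra_simps)
  also have "\<dots> = - A * sin (ph x) * (s\<^sup>2 * (1 + k\<^sup>2) - 2 * s\<^sup>2 * k\<^sup>2 * (sin (ph x))\<^sup>2)"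
    unfolding g2 cos_squared_eq by (simp add: algebra_simps)
  also have "\<dots> = pp x"
    unfolding pp_def s2k2 s2k2' u0_fun by (simp add: algebra_simps power2_eq_square)
  finally have eq: "A * s * (- sin (ph x) * (g (ph x) * s) * g (ph x) + - (k\<^sup>2 * sin (ph x) * cos (ph x) * s) * cos (ph x)) = pp x" .
  show ?thesis unfolding p_def by (rule DERIV_cong[OF d eq])
qed

lemma deriv_u0: "deriv (u0 E) = p"
  by (rule ext) (rule DERIV_imp_deriv[OF u0_deriv])
lemma deriv_p: "deriv p = pp"
  by (rule ext) (rule DERIV_imp_deriv[OF p_deriv])

lemma u0_bound: "(u0 E x)\<^sup>2 \<le> 1 - E"
  unfolding u0_fun power_mult_distrib A2 using E1 by (intro mult_left_le) (auto simp: abs_square_le_1)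

lemma u0_abs_le1: "\<bar>u0 E x\<bar> \<le> 1"
  using u0_bound[of x] E0 abs_square_le_1[of "u0 E x"] by linarith

lemma p_sq: "(p x)\<^sup>2 = ((1 - (u0 E x)\<^sup>2)\<^sup>2 - E\<^sup>2) / 2"
proof -
  have "(p x)\<^sup>2 = A\<^sup>2 * s\<^sup>2 * (cos (ph x))\<^sup>2 * (g (ph x))\<^sup>2"
    unfolding p_def by (simp add: power_mult_distrib)
  also have "\<dots> = (1 - E) * ((1 + E) / 2) * (1 - (sin (ph x))\<^sup>2) * (1 - (1 - E) / (1 + E) * (sin (ph x))\<^sup>2)"
    unfolding A2 s2 g2 k2 cos_squared_eq ..
  also have "\<dots> = ((1 - (1 - E) * (sin (ph x))\<^sup>2)\<^sup>2 - E\<^sup>2) / 2"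
    using E0 by (simp add: field_simps power2_eq_square)
  also have "\<dots> = ((1 - (u0 E x)\<^sup>2)\<^sup>2 - E\<^sup>2) / 2"
    unfolding u0_fun by (simp add: power_mult_distrib A2)
  finally show ?thesis .
qed

lemma pp_bound: "\<bar>pp x\<bar> \<le> 1"
proof -
  have a: "\<bar>u0 E x\<bar> \<le> 1" by (rule u0_abs_le1)
  have "0 \<le> 1 - (u0 E x)\<^sup>2" "1 - (u0 E x)\<^sup>2 \<le> 1" using a by (auto simp: abs_square_le_1)
  then have "\<bar>1 - (u0 E x)\<^sup>2\<bar> \<le> 1" by simp
  then have "\<bar>1 - (u0 E x)\<^sup>2\<bar> * \<bar>u0 E x\<bar> \<le> 1 * 1" using a by (intro mult_mono) auto
  moreover have "\<bar>pp x\<bar> = \<bar>1 - (u0 E x)\<^sup>2\<bar> * \<bar>u0 E x\<bar>"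
    unfolding pp_def by (simp only: abs_mult abs_minus_cancel)
  ultimately show ?thesis by simp
qed

lemma p_bound: "\<bar>p x\<bar> \<le> 1"
proof -
  have "0 \<le> 1 - (u0 E x)\<^sup>2" "1 - (u0 E x)\<^sup>2 \<le> 1" using u0_abs_le1[of x] by (auto simp: abs_square_le_1)
  then have "(1 - (u0 E x)\<^sup>2)\<^sup>2 \<le> 1" by (simp add: abs_square_le_1)
  then have h: "(1 - (u0 E x)\<^sup>2)\<^sup>2 - E\<^sup>2 \<le> 2" using zero_le_power2[of E] by linarith
  then have "(p x)\<^sup>2 \<le> 1" unfolding p_sq by simp
  then show ?thesis by (simp add: abs_square_le_1)
qed

lemma ppp_deriv: "(pp has_real_derivative (3 * (u0 E x)\<^sup>2 - 1) * p x) (at x)"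
proof -
  note d = DERIV_diff[OF DERIV_mult[OF u0_deriv DERIV_mult[OF u0_deriv u0_deriv]] u0_deriv]
  have "(\<lambda>x. u0 E x * (u0 E x * u0 E x) - u0 E x) = pp"
    unfolding pp_def by (rule ext) (simp add: algebra_simps power2_eq_square)
  then show ?thesis using d by (simp add: algebra_simps power2_eq_square)
qed

lemma p_cont: "continuous_on S p"
  by (intro continuous_at_imp_continuous_on ballI) (rule DERIV_isCont[OF p_deriv])
lemma pp_cont: "continuous_on S pp"
  by (intro continuous_at_imp_continuous_on ballI) (rule DERIV_isCont[OF ppp_deriv])
lemma u0_cont: "continuous_on S (u0 E)"
  by (intro continuous_at_imp_continuous_on ballI) (rule DERIV_isCont[OF u0_deriv])

lemma p_zero_iff: "p x = 0 \<longleftrightarrow> cos (ph x) = 0"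
  using A_pos s_pos g_pos[of "ph x"] unfolding p_def by simp

lemma ph_strict_mono: "x < y \<Longrightarrow> ph x < ph y"
  unfolding ph_def using s_pos by (intro am_strict_mono) simp

lemma EF_ph: "EF (ph x) = x * s"
  unfolding ph_def by (rule EF_am)

definition "zz (n::int) = EF (of_int n * pi + pi / 2) / s"

lemma ph_zz: "ph (zz n) = of_int n * pi + pi / 2"
  unfolding ph_def zz_def using s_pos by (simp add: am_EF)

lemma p_zz: "p (zz n) = 0"
  unfolding p_zero_iff ph_zz cos_zero_iff_int2 by blast

lemma p_zero_iff_zz: "p x = 0 \<longleftrightarrow> (\<exists>n. x = zz n)"
proof
  assume "p x = 0"
  then obtain n :: int where n: "ph x = of_int n * pi + pi / 2"
    unfolding p_zero_iff cos_zero_iff_int2 by blast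
  have "x * s = EF (of_int n * pi + pi / 2)" using EF_ph[of x] n by simp
  then have "x = zz n" unfolding zz_def using s_pos by (simp add: field_simps)
  then show "\<exists>n. x = zz n" ..
qed (auto simp: p_zz)

lemma zz_strict_mono: "m < n \<Longrightarrow> zz m < zz n"
proof -
  assume "m < n"
  then have "of_int m * pi + pi / 2 < of_int n * pi + pi / 2" by simp
  then have "EF (of_int m * pi + pi / 2) < EF (of_int n * pi + pi / 2)" by (rule EF_strict_mono)
  then show ?thesis unfolding zz_def using s_pos by (simp add: divide_strict_right_mono)
qed

lemma zz_mono: "m \<le> n \<Longrightarrow> zz m \<le> zz n"
  using zz_strict_mono by (cases "m = n") (auto simp: less_imp_le)

lemma zz_cover: "\<exists>n. zz n \<le> x \<and> x < zz (n + 1)"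
proof -
  define n where "n = \<lfloor>(ph x - pi / 2) / pi\<rfloor>"
  have "of_int n \<le> (ph x - pi / 2) / pi" "(ph x - pi / 2) / pi < of_int n + 1"
    unfolding n_def by linarith+
  then have 1: "of_int n * pi + pi / 2 \<le> ph x" and 2: "ph x < of_int (n + 1) * pi + pi / 2"
    using pi_gt_zero by (simp_all add: field_simps)
  have "EF (of_int n * pi + pi / 2) \<le> EF (ph x)" using 1 by (rule EF_mono)
  then have a: "zz n \<le> x" unfolding zz_def EF_ph using s_pos by (simp add: field_simps)
  have "EF (ph x) < EF (of_int (n + 1) * pi + pi / 2)" using 2 by (rule EF_strict_mono)
  then have b: "x < zz (n + 1)" unfolding zz_def EF_ph using s_pos by (simp add: field_simps)
  from a b show ?thesis by blast
qed

lemma p_nonzero_between: "zz n < x \<Longrightarrow> x < zz (n + 1) \<Longrightarrow> p x \<noteq> 0"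
proof
  assume a: "zz n < x" "x < zz (n + 1)" "p x = 0"
  then obtain m where m: "x = zz m" using p_zero_iff_zz by blast
  have "n < m" using a(1) m zz_mono by (metis not_le)
  moreover have "m < n + 1" using a(2) m zz_mono by (metis not_le)
  ultimately show False by simp
qed

lemma zz_ge: "n \<ge> 0 \<Longrightarrow> zz n \<ge> (of_int n * pi + pi / 2) / s"
  unfolding zz_def using s_pos EF_ge[of "of_int n * pi + pi / 2"]
  by (simp add: divide_right_mono)

lemma zz_le: "n \<le> -1 \<Longrightarrow> zz n \<le> (of_int n * pi + pi / 2) / s"
proof -
  assume n: "n \<le> -1"
  then have "of_int n \<le> (-1::real)" by simp
  then have "of_int n * pi \<le> -1 * pi" by (rule mult_right_mono) simp
  then have "of_int n * pi + pi / 2 \<le> 0" using pi_gt_zero by linarith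
  then show ?thesis unfolding zz_def using s_pos EF_le[of "of_int n * pi + pi / 2"]
    by (simp add: divide_right_mono)
qed

lemma u0_zz: "(u0 E (zz n))\<^sup>2 = 1 - E"
proof -
  have "(sin (of_int n * pi + pi / 2))\<^sup>2 = 1"
    using cos_zero_iff_int2[of "of_int n * pi + pi / 2"] by (simp add: sin_squared_eq)
  then show ?thesis unfolding u0_fun ph_zz by (simp add: power_mult_distrib A2)
qed

lemma pp_zz: "pp (zz n) \<noteq> 0"
proof -
  have "(pp (zz n))\<^sup>2 = E\<^sup>2 * (1 - E)"
    unfolding pp_def using u0_zz[of n] by (simp add: power_mult_distrib)
  then show ?thesis using E0 E1 by auto
qed

lemma u0_sq_large: "(p x)\<^sup>2 < E * (1 - E) / 2 \<Longrightarrow> (u0 E x)\<^sup>2 \<ge> (1 - E) / 2"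
proof -
  assume h: "(p x)\<^sup>2 < E * (1 - E) / 2"
  define b where "b = (u0 E x)\<^sup>2"
  have b1: "b \<le> 1 - E" unfolding b_def by (rule u0_bound)
  have "2 * (p x)\<^sup>2 = (1 - b - E) * (1 - b + E)" unfolding p_sq b_def by (simp add: power2_eq_square field_simps)
  moreover have "(1 - b - E) * (1 - b + E) \<ge> (1 - b - E) * (2 * E)"
    using b1 by (intro mult_left_mono) auto
  ultimately have "(1 - E - b) * E < E * (1 - E) / 2" using h by (simp add: algebra_simps)
  then have "(1 - E - b) * E < (1 - E) / 2 * E" by (simp add: algebra_simps)
  then have "(1 - E - b) < (1 - E) / 2" using E0 by (simp add: mult_less_cancel_right)
  then show ?thesis unfolding b_def by simp
qed

end


definition acd :: "real set \<Rightarrow> (real \<Rightarrow> real) \<Rightarrow> (real \<Rightarrow> real) \<Rightarrow> bool" where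
  "acd S F f \<longleftrightarrow> continuous_on S F \<and>
     (\<forall>a b. a \<le> b \<longrightarrow> {a..b} \<subseteq> S \<longrightarrow> f absolutely_integrable_on {a..b} \<and> (f has_integral (F b - F a)) {a..b})"

lemma acdD:
  assumes "acd S F f" "a \<le> b" "{a..b} \<subseteq> S"
  shows "f absolutely_integrable_on {a..b}" "(f has_integral (F b - F a)) {a..b}"
  using assms unfolding acd_def by auto

lemma acd_cont: "acd S F f \<Longrightarrow> continuous_on S F"
  unfolding acd_def by auto

lemma acd_subset: "acd S F f \<Longrightarrow> T \<subseteq> S \<Longrightarrow> acd T F f"
  unfolding acd_def by (auto intro: continuous_on_subset)

lemma acd_C1:
  assumes d: "\<And>x. x \<in> S \<Longrightarrow> (F has_real_derivative f x) (at x)" and c: "continuous_on S f"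
  shows "acd S F f"
  unfolding acd_def
proof (intro conjI allI impI)
  show "continuous_on S F"
    using d DERIV_isCont continuous_at_imp_continuous_on by blast
  fix a b :: real assume ab: "a \<le> b" "{a..b} \<subseteq> S"
  show "f absolutely_integrable_on {a..b}"
    by (rule absolutely_integrable_continuous_real) (rule continuous_on_subset[OF c ab(2)])
  show "(f has_integral F b - F a) {a..b}"
  proof (rule fundamental_theorem_of_calculus[OF ab(1)])
    fix x assume "x \<in> {a..b}"
    then have "(F has_real_derivative f x) (at x)" using d ab(2) by auto
    then show "(F has_vector_derivative f x) (at x within {a..b})"
      by (simp add: has_real_derivative_iff_has_vector_derivative has_vector_derivative_at_within)
  qed
qed

lemma acd_const: "acd S (\<lambda>x. c) (\<lambda>x. 0)"
  by (rule acd_C1) (auto intro!: derivative_eq_intros)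

lemma acd_add:
  assumes "acd S F f" "acd S G g"
  shows "acd S (\<lambda>x. F x + G x) (\<lambda>x. f x + g x)"
  using assms unfolding acd_def
  by (auto intro!: continuous_on_add set_integral_add(1) has_integral_add[THEN has_integral_eq_rhs])

lemma acd_diff:
  assumes "acd S F f" "acd S G g"
  shows "acd S (\<lambda>x. F x - G x) (\<lambda>x. f x - g x)"
  using assms unfolding acd_def
  by (auto intro!: continuous_on_diff set_integral_diff(1) has_integral_diff[THEN has_integral_eq_rhs])

lemma acd_cmult:
  assumes "acd S F f"
  shows "acd S (\<lambda>x. c * F x) (\<lambda>x. c * f x)"
  using assms unfolding acd_def
  by (auto intro!: continuous_on_mult set_integrable_mult_right has_integral_mult_right[THEN has_integral_eq_rhs]
      simp: right_diff_distrib)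

lemma acd_cong:
  assumes "acd S F f" "\<And>x. x \<in> S \<Longrightarrow> F x = G x" "\<And>x. x \<in> S \<Longrightarrow> f x = g x"
  shows "acd S G g"
  unfolding acd_def
proof (intro conjI allI impI)
  show "continuous_on S G" using acd_cont[OF assms(1)] assms(2) continuous_on_cong by blast
  fix a b :: real assume ab: "a \<le> b" "{a..b} \<subseteq> S"
  have "\<And>x. x \<in> {a..b} - {} \<Longrightarrow> g x = f x" using assms(3) ab(2) by auto
  then show "g absolutely_integrable_on {a..b}"
    by (rule absolutely_integrable_spike[OF acdD(1)[OF assms(1) ab] negligible_empty])
  have "(f has_integral F b - F a) {a..b}" using acdD(2)[OF assms(1) ab] .
  then have "(g has_integral F b - F a) {a..b}"
    by (rule has_integral_eq[rotated]) (use assms(3) ab(2) in auto)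
  moreover have "a \<in> S" "b \<in> S" using ab by auto
  ultimately show "(g has_integral G b - G a) {a..b}" using assms(2) by metis
qed

lemma absint_mult_cont:
  fixes f G :: "real \<Rightarrow> real"
  assumes "f absolutely_integrable_on {a..b}" "continuous_on {a..b} G"
  shows "(\<lambda>x. f x * G x) absolutely_integrable_on {a..b}"
proof -
  have "(\<lambda>x. G x * f x) absolutely_integrable_on {a..b}"
  proof (rule absolutely_integrable_bounded_measurable_product_real)
    show "G \<in> borel_measurable (lebesgue_on {a..b})"
      using assms(2) by (rule continuous_imp_measurable_on_sets_lebesgue) simp
    show "bounded (G ` {a..b})"
      using assms(2) compact_continuous_image compact_imp_bounded by blast
  qed (use assms in auto)
  then show ?thesis by (simp add: mult.commute)
qed

lemma chain_bound:
  fixes \<Phi> M :: "real \<Rightarrow> real"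
  assumes ab: "a \<le> b"
    and loc: "\<And>\<epsilon>. \<epsilon> > 0 \<Longrightarrow> \<exists>\<delta>>0. \<forall>x y. a \<le> x \<longrightarrow> x \<le> y \<longrightarrow> y \<le> b \<longrightarrow> y - x < \<delta> \<longrightarrow>
                 \<bar>\<Phi> y - \<Phi> x\<bar> \<le> \<epsilon> * (M y - M x)"
    and mono: "\<And>x y. a \<le> x \<Longrightarrow> x \<le> y \<Longrightarrow> y \<le> b \<Longrightarrow> M x \<le> M y"
  shows "\<Phi> b = \<Phi> a"
proof -
  have main: "\<bar>\<Phi> b - \<Phi> a\<bar> \<le> \<epsilon> * (M b - M a)" if e: "\<epsilon> > 0" for \<epsilon>
  proof -
    obtain \<delta> where d: "\<delta> > 0" and dl: "\<forall>x y. a \<le> x \<longrightarrow> x \<le> y \<longrightarrow> y \<le> b \<longrightarrow> y - x < \<delta> \<longrightarrow>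
                 \<bar>\<Phi> y - \<Phi> x\<bar> \<le> \<epsilon> * (M y - M x)" using loc[OF e] by blast
    have P: "\<forall>x y. a \<le> x \<longrightarrow> x \<le> y \<longrightarrow> y \<le> b \<longrightarrow> y - x \<le> real n * (\<delta> / 2) \<longrightarrow>
                 \<bar>\<Phi> y - \<Phi> x\<bar> \<le> \<epsilon> * (M y - M x)" for n
    proof (induction n)
      case 0
      then show ?case by auto
    next
      case (Suc n)
      show ?case
      proof (intro allI impI)
        fix x y assume xy: "a \<le> x" "x \<le> y" "y \<le> b" "y - x \<le> real (Suc n) * (\<delta> / 2)"
        show "\<bar>\<Phi> y - \<Phi> x\<bar> \<le> \<epsilon> * (M y - M x)"
        proof (cases "y - x < \<delta>")
          case True then show ?thesis using dl xy by blast
        next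
          case False
          define m where "m = y - \<delta> / 2"
          have m: "x \<le> m" "m \<le> y" "m - x \<le> real n * (\<delta> / 2)" "y - m < \<delta>"
            using False d xy(4) unfolding m_def by (auto simp: algebra_simps)
          have 1: "\<bar>\<Phi> m - \<Phi> x\<bar> \<le> \<epsilon> * (M m - M x)" using Suc.IH xy m by auto
          have 2: "\<bar>\<Phi> y - \<Phi> m\<bar> \<le> \<epsilon> * (M y - M m)" using dl xy m by auto
          have "\<bar>\<Phi> y - \<Phi> x\<bar> \<le> \<bar>\<Phi> y - \<Phi> m\<bar> + \<bar>\<Phi> m - \<Phi> x\<bar>" by linarith
          also have "\<dots> \<le> \<epsilon> * (M y - M m) + \<epsilon> * (M m - M x)" using 1 2 by linarith
          also have "\<dots> = \<epsilon> * (M y - M x)" by (simp add: algebra_simps)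
          finally show ?thesis .
        qed
      qed
    qed
    have d2: "0 < \<delta> / 2" using d by simp
    have "\<exists>n. b - a < real n * (\<delta> / 2)" using reals_Archimedean3[OF d2] by blast
    then obtain n where n: "b - a < real n * (\<delta> / 2)" by blast
    show ?thesis using P[of n] n ab by auto
  qed
  have W: "M b - M a \<ge> 0" using mono[of a b] ab by auto
  show ?thesis
  proof (rule ccontr)
    assume ne: "\<Phi> b \<noteq> \<Phi> a"
    define D where "D = \<bar>\<Phi> b - \<Phi> a\<bar>"
    have D: "D > 0" using ne unfolding D_def by auto
    have "D \<le> D / (2 * (M b - M a + 1)) * (M b - M a)"
      using main[of "D / (2 * (M b - M a + 1))"] D W unfolding D_def by auto
    also have "\<dots> \<le> D / 2"
      using D W by (simp add: field_simps)
    finally show False using D by simp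
  qed
qed

lemma acd_mult:
  assumes F: "acd S F f" and G: "acd S G g"
  shows "acd S (\<lambda>x. F x * G x) (\<lambda>x. f x * G x + F x * g x)"
  unfolding acd_def
proof (intro conjI allI impI)
  show "continuous_on S (\<lambda>x. F x * G x)"
    using acd_cont[OF F] acd_cont[OF G] by (intro continuous_intros)
  fix a b :: real assume ab: "a \<le> b" "{a..b} \<subseteq> S"
  have cF: "continuous_on {a..b} F" and cG: "continuous_on {a..b} G"
    using acd_cont[OF F] acd_cont[OF G] ab(2) continuous_on_subset by blast+
  have sub: "{x..y} \<subseteq> S" if "a \<le> x" "y \<le> b" for x y using ab that by auto
  have fi: "f absolutely_integrable_on {x..y}" and gi: "g absolutely_integrable_on {x..y}"
    if "a \<le> x" "y \<le> b" for x y
    using acdD(1)[OF F, of x y] acdD(1)[OF G, of x y] sub[OF that]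
    by (cases "x \<le> y"; auto)+
  have fG: "(\<lambda>t. f t * G t) absolutely_integrable_on {x..y}" and Fg: "(\<lambda>t. F t * g t) absolutely_integrable_on {x..y}"
    if "a \<le> x" "y \<le> b" for x y
  proof -
    have cFxy: "continuous_on {x..y} F" "continuous_on {x..y} G"
      using cF cG that by (auto intro: continuous_on_subset)
    show "(\<lambda>t. f t * G t) absolutely_integrable_on {x..y}" using absint_mult_cont[OF fi[OF that] cFxy(2)] .
    show "(\<lambda>t. F t * g t) absolutely_integrable_on {x..y}"
      using absint_mult_cont[OF gi[OF that] cFxy(1)] by (simp add: mult.commute)
  qed
  define h where "h t = f t * G t + F t * g t" for t
  have hi: "h absolutely_integrable_on {x..y}" if "a \<le> x" "y \<le> b" for x y
    unfolding h_def using fG[OF that] Fg[OF that] by (rule set_integral_add(1))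
  show "(\<lambda>x. f x * G x + F x * g x) absolutely_integrable_on {a..b}"
    using hi[OF order_refl order_refl] unfolding h_def by simp
  define \<Phi> where "\<Phi> y = F y * G y - integral {a..y} h" for y
  define M where "M y = integral {a..y} (\<lambda>t. \<bar>f t\<bar> + \<bar>g t\<bar>)" for y
  have absi: "(\<lambda>t. \<bar>f t\<bar> + \<bar>g t\<bar>) absolutely_integrable_on {x..y}" if "a \<le> x" "y \<le> b" for x y
    using fi[OF that] gi[OF that] by (intro set_integral_add(1) set_integrable_abs)
  have comb: "integral {a..y} k - integral {a..x} k = integral {x..y} k"
    if "a \<le> x" "x \<le> y" "y \<le> b" "k absolutely_integrable_on {a..b}" for x y and k :: "real \<Rightarrow> real"
  proof -
    have "k integrable_on {a..y}"
      using that absolutely_integrable_on_subinterval[where f=k and S="{a..b}" and a=a and b=y] set_lebesgue_integral_eq_integral(1) by auto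
    then show ?thesis
      using Henstock_Kurzweil_Integration.integral_combine[of a x y k] that by auto
  qed
  have "\<Phi> b = \<Phi> a"
  proof (rule chain_bound[OF ab(1)])
    fix x y assume xy: "a \<le> x" "x \<le> y" "y \<le> b"
    have "integral {x..y} (\<lambda>t. \<bar>f t\<bar> + \<bar>g t\<bar>) \<ge> 0"
      by (rule integral_nonneg) (use absi[of x y] xy set_lebesgue_integral_eq_integral(1) in auto)
    then show "M x \<le> M y" unfolding M_def using comb[OF xy absi[OF order_refl order_refl]] by linarith
  next
    fix \<epsilon> :: real assume e: "\<epsilon> > 0"
    have ucF: "uniformly_continuous_on {a..b} F" and ucG: "uniformly_continuous_on {a..b} G"
      using cF cG compact_uniformly_continuous by blast+
    obtain d1 where d1: "d1 > 0" "\<forall>x\<in>{a..b}. \<forall>x'\<in>{a..b}. dist x' x < d1 \<longrightarrow> dist (F x') (F x) < \<epsilon>"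
      using ucF e unfolding uniformly_continuous_on_def by metis
    obtain d2 where d2: "d2 > 0" "\<forall>x\<in>{a..b}. \<forall>x'\<in>{a..b}. dist x' x < d2 \<longrightarrow> dist (G x') (G x) < \<epsilon>"
      using ucG e unfolding uniformly_continuous_on_def by metis
    show "\<exists>\<delta>>0. \<forall>x y. a \<le> x \<longrightarrow> x \<le> y \<longrightarrow> y \<le> b \<longrightarrow> y - x < \<delta> \<longrightarrow>
                 \<bar>\<Phi> y - \<Phi> x\<bar> \<le> \<epsilon> * (M y - M x)"
    proof (intro exI[of _ "min d1 d2"] conjI allI impI)
      show "min d1 d2 > 0" using d1 d2 by simp
      fix x y assume xy: "a \<le> x" "x \<le> y" "y \<le> b" "y - x < min d1 d2"
      have ax: "a \<le> x" and yb: "y \<le> b" using xy by auto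
      have Fclose: "\<bar>F x - F t\<bar> \<le> \<epsilon>" and Gclose: "\<bar>G y - G t\<bar> \<le> \<epsilon>" if "t \<in> {x..y}" for t
      proof -
        have "dist x t < d1" "dist y t < d2" using that xy by (auto simp: dist_real_def)
        moreover have tab: "t \<in> {a..b}" "x \<in> {a..b}" "y \<in> {a..b}" using that xy by auto
        ultimately have "dist (F x) (F t) < \<epsilon>" "dist (G y) (G t) < \<epsilon>"
          using d1(2)[rule_format, of t x] d2(2)[rule_format, of t y] by blast+
        then show "\<bar>F x - F t\<bar> \<le> \<epsilon>" "\<bar>G y - G t\<bar> \<le> \<epsilon>" by (auto simp: dist_real_def)
      qed
      have fint: "(f has_integral F y - F x) {x..y}" and gint: "(g has_integral G y - G x) {x..y}"
        using acdD(2)[OF F xy(2) sub[OF ax yb]] acdD(2)[OF G xy(2) sub[OF ax yb]] by auto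
      have fGi: "(\<lambda>t. f t * G t) integrable_on {x..y}" and Fgi: "(\<lambda>t. F t * g t) integrable_on {x..y}"
        using fG[OF ax yb] Fg[OF ax yb] set_lebesgue_integral_eq_integral(1) by auto
      have I1: "((\<lambda>t. f t * (G y - G t)) has_integral G y * (F y - F x) - integral {x..y} (\<lambda>t. f t * G t)) {x..y}"
      proof -
        have "((\<lambda>t. f t * G y) has_integral (F y - F x) * G y) {x..y}"
          using has_integral_mult_left[OF fint] .
        from has_integral_diff[OF this integrable_integral[OF fGi]]
        show ?thesis by (simp add: algebra_simps)
      qed
      have I2: "((\<lambda>t. (F x - F t) * g t) has_integral F x * (G y - G x) - integral {x..y} (\<lambda>t. F t * g t)) {x..y}"
      proof -
        have "((\<lambda>t. F x * g t) has_integral F x * (G y - G x)) {x..y}"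
          using has_integral_mult_right[OF gint] .
        from has_integral_diff[OF this integrable_integral[OF Fgi]]
        show ?thesis by (simp add: algebra_simps)
      qed
      have hxy: "integral {x..y} h = integral {x..y} (\<lambda>t. f t * G t) + integral {x..y} (\<lambda>t. F t * g t)"
        unfolding h_def by (rule integral_add[OF fGi Fgi])
      have "\<Phi> y - \<Phi> x = F y * G y - F x * G x - integral {x..y} h"
        unfolding \<Phi>_def using comb[OF xy(1-3) hi[OF order_refl order_refl]] by simp
      also have "\<dots> = integral {x..y} (\<lambda>t. f t * (G y - G t)) + integral {x..y} (\<lambda>t. (F x - F t) * g t)"
        using integral_unique[OF I1] integral_unique[OF I2] hxy by (simp add: algebra_simps)
      finally have eq: "\<Phi> y - \<Phi> x = integral {x..y} (\<lambda>t. f t * (G y - G t)) + integral {x..y} (\<lambda>t. (F x - F t) * g t)" .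
      have af: "(\<lambda>t. \<bar>f t\<bar>) integrable_on {x..y}" and ag: "(\<lambda>t. \<bar>g t\<bar>) integrable_on {x..y}"
        using set_integrable_abs[OF fi[OF ax yb]] set_integrable_abs[OF gi[OF ax yb]]
          set_lebesgue_integral_eq_integral(1) by blast+
      have B1: "\<bar>integral {x..y} (\<lambda>t. f t * (G y - G t))\<bar> \<le> integral {x..y} (\<lambda>t. \<epsilon> * \<bar>f t\<bar>)"
      proof -
        have "norm (integral {x..y} (\<lambda>t. f t * (G y - G t))) \<le> integral {x..y} (\<lambda>t. \<epsilon> * \<bar>f t\<bar>)"
        proof (rule integral_norm_bound_integral)
          show "(\<lambda>t. f t * (G y - G t)) integrable_on {x..y}" using I1 by blast
          show "(\<lambda>t. \<epsilon> * \<bar>f t\<bar>) integrable_on {x..y}" using af by (rule integrable_on_mult_right)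
          fix t assume "t \<in> {x..y}"
          then have "\<bar>G y - G t\<bar> \<le> \<epsilon>" by (rule Gclose)
          then have "\<bar>f t\<bar> * \<bar>G y - G t\<bar> \<le> \<bar>f t\<bar> * \<epsilon>" by (intro mult_left_mono) auto
          then show "norm (f t * (G y - G t)) \<le> \<epsilon> * \<bar>f t\<bar>"
            by (simp add: abs_mult mult.commute)
        qed
        then show ?thesis by simp
      qed
      have B2: "\<bar>integral {x..y} (\<lambda>t. (F x - F t) * g t)\<bar> \<le> integral {x..y} (\<lambda>t. \<epsilon> * \<bar>g t\<bar>)"
      proof -
        have "norm (integral {x..y} (\<lambda>t. (F x - F t) * g t)) \<le> integral {x..y} (\<lambda>t. \<epsilon> * \<bar>g t\<bar>)"
        proof (rule integral_norm_bound_integral)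
          show "(\<lambda>t. (F x - F t) * g t) integrable_on {x..y}" using I2 by blast
          show "(\<lambda>t. \<epsilon> * \<bar>g t\<bar>) integrable_on {x..y}" using ag by (rule integrable_on_mult_right)
          fix t assume "t \<in> {x..y}"
          then have "\<bar>F x - F t\<bar> \<le> \<epsilon>" by (rule Fclose)
          then have "\<bar>F x - F t\<bar> * \<bar>g t\<bar> \<le> \<epsilon> * \<bar>g t\<bar>" by (intro mult_right_mono) auto
          then show "norm ((F x - F t) * g t) \<le> \<epsilon> * \<bar>g t\<bar>"
            by (simp add: abs_mult)
        qed
        then show ?thesis by simp
      qed
      have "integral {x..y} (\<lambda>t. \<epsilon> * \<bar>f t\<bar>) + integral {x..y} (\<lambda>t. \<epsilon> * \<bar>g t\<bar>)
          = \<epsilon> * integral {x..y} (\<lambda>t. \<bar>f t\<bar> + \<bar>g t\<bar>)"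
        using af ag by (simp add: integral_add integral_mult_right distrib_left)
      also have "\<dots> = \<epsilon> * (M y - M x)"
        unfolding M_def using comb[OF xy(1-3) absi[OF order_refl order_refl]] by simp
      finally show "\<bar>\<Phi> y - \<Phi> x\<bar> \<le> \<epsilon> * (M y - M x)"
        using eq B1 B2 by linarith
    qed
  qed
  then have "integral {a..b} h = F b * G b - F a * G a"
    unfolding \<Phi>_def by simp
  moreover have "h integrable_on {a..b}"
    using hi[OF order_refl order_refl] set_lebesgue_integral_eq_integral(1) by auto
  ultimately show "((\<lambda>x. f x * G x + F x * g x) has_integral F b * G b - F a * G a) {a..b}"
    unfolding h_def[abs_def] by (metis has_integral_integrable_integral)
qed


lemma alg_B_poly:
  fixes a p q u u1 u2 E :: real
  assumes Q: "q * p = - (1 - a\<^sup>2) * a" and P2: "2 * p\<^sup>2 = (1 - a\<^sup>2)\<^sup>2 - E\<^sup>2"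
  shows "- (((3 * a\<^sup>2 - 1 - q\<^sup>2) * (u1 - q * u) + q * (u2 - (3 * a\<^sup>2 - 1) * u - q * (u1 - q * u))) * (u1 - q * u)
             + q * (u1 - q * u) * (u2 - (3 * a\<^sup>2 - 1) * u - q * (u1 - q * u)))
         - 2 * ((6 * a * p * u + (3 * a\<^sup>2 - 1) * u1) * (u1 - q * u) + (3 * a\<^sup>2 - 1) * u * (u2 - (3 * a\<^sup>2 - 1) * u - q * (u1 - q * u)))
         + (((12 * (p * p + a * (- (1 - a\<^sup>2) * a)) - 10 * (2 * a * p * q + a\<^sup>2 * (3 * a\<^sup>2 - 1 - q\<^sup>2))) * u
            + (12 * a * p - 10 * a\<^sup>2 * q) * u1) * u + (12 * a * p - 10 * a\<^sup>2 * q) * u * u1) / 2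
       = ((u2 - (3 * a\<^sup>2 - 1) * u - q * (u1 - q * u))\<^sup>2 + 3 * (u1 - q * u)\<^sup>2 + 2 * (u1 - q * u)\<^sup>2 * (q\<^sup>2 - 2 * a\<^sup>2))
         - ((u2)\<^sup>2 + 5 * a\<^sup>2 * (u1)\<^sup>2 + (- 5 * a ^ 4 + 15 * a\<^sup>2 - 4 + 3 * E\<^sup>2) * u\<^sup>2)"
  using Q P2 by algebra


lemma meas_iff: "(f::real \<Rightarrow> real) measurable_on UNIV \<longleftrightarrow> f \<in> borel_measurable lebesgue"
  using measurable_on_iff_borel_measurable[of UNIV f] by (simp add: lebesgue_on_UNIV_eq)

lemma meas_restrict: "f \<in> borel_measurable lebesgue \<Longrightarrow> f \<in> borel_measurable (lebesgue_on S)"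
  by (rule measurable_restrict_space1)

lemma cont_meas: "continuous_on UNIV (f::real \<Rightarrow> real) \<Longrightarrow> f \<in> borel_measurable lebesgue"
  using continuous_imp_measurable_on_sets_lebesgue[of UNIV f] by (simp add: lebesgue_on_UNIV_eq)

lemma L2_absint:
  fixes f :: "real \<Rightarrow> real"
  assumes m: "f \<in> borel_measurable lebesgue" and i: "(\<lambda>x. (f x)\<^sup>2) integrable_on {a..b}"
  shows "f absolutely_integrable_on {a..b}"
proof (rule measurable_bounded_by_integrable_imp_absolutely_integrable)
  show "f \<in> borel_measurable (lebesgue_on {a..b})" using m by (rule meas_restrict)
  show "(\<lambda>x. 1 / 2 * (1 + (f x)\<^sup>2)) integrable_on {a..b}"
    using integrable_add[OF integrable_const_ivl[of 1 a b] i] by (intro integrable_on_mult_right) auto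
  fix x
  have "0 \<le> (\<bar>f x\<bar> - 1)\<^sup>2" by simp
  then show "norm (f x) \<le> 1 / 2 * (1 + (f x)\<^sup>2)"
    by (simp add: power2_eq_square algebra_simps)
qed auto

lemma nonneg_bound_int:
  fixes f g :: "real \<Rightarrow> real"
  assumes m: "f \<in> borel_measurable lebesgue" and g: "g integrable_on S" and S: "S \<in> sets lebesgue"
    and le: "\<And>x. x \<in> S \<Longrightarrow> \<bar>f x\<bar> \<le> g x"
  shows "f absolutely_integrable_on S"
  by (rule measurable_bounded_by_integrable_imp_absolutely_integrable[OF meas_restrict[OF m] S g]) (use le in auto)

locale lmain = ell +
  fixes u u1 u2 :: "real \<Rightarrow> real"
  assumes H2: "H2_with_derivs u u1 u2"
    and uz: "\<And>x. p x = 0 \<Longrightarrow> u x = 0"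
begin

lemma u_deriv: "(u has_real_derivative u1 x) (at x)"
  using H2 unfolding H2_with_derivs_def by auto
lemma u1_cont: "continuous_on UNIV u1"
  using H2 unfolding H2_with_derivs_def H1_with_deriv_def by auto
lemma u1_int: "a \<le> b \<Longrightarrow> (u2 has_integral u1 b - u1 a) {a..b}"
  using H2 unfolding H2_with_derivs_def H1_with_deriv_def by auto
lemma sq_u: "square_integrable u" and sq_u1: "square_integrable u1" and sq_u2: "square_integrable u2"
  using H2 unfolding H2_with_derivs_def H1_with_deriv_def by auto
lemma u_cont: "continuous_on UNIV u"
  by (intro continuous_at_imp_continuous_on ballI) (rule DERIV_isCont[OF u_deriv])

lemma meas_u [measurable]: "u \<in> borel_measurable lebesgue" using u_cont by (rule cont_meas)
lemma meas_u1 [measurable]: "u1 \<in> borel_measurable lebesgue" using u1_cont by (rule cont_meas)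
lemma meas_u2 [measurable]: "u2 \<in> borel_measurable lebesgue"
  using sq_u2 unfolding square_integrable_def meas_iff by simp
lemma meas_u0 [measurable]: "u0 E \<in> borel_measurable lebesgue" using u0_cont by (rule cont_meas)
lemma meas_p [measurable]: "p \<in> borel_measurable lebesgue" using p_cont by (rule cont_meas)
lemma meas_pp [measurable]: "pp \<in> borel_measurable lebesgue" using pp_cont by (rule cont_meas)

lemma int_u2sq: "(\<lambda>x. (u2 x)\<^sup>2) integrable_on UNIV" and int_u1sq: "(\<lambda>x. (u1 x)\<^sup>2) integrable_on UNIV"
  and int_usq: "(\<lambda>x. (u x)\<^sup>2) integrable_on UNIV"
  using sq_u sq_u1 sq_u2 unfolding square_integrable_def by auto

lemma absint_u2: "u2 absolutely_integrable_on {a..b}"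
  by (rule L2_absint[OF meas_u2 integrable_on_subinterval[OF int_u2sq]]) auto

lemma acd_u: "acd S u u1"
  by (rule acd_C1[OF u_deriv]) (rule continuous_on_subset[OF u1_cont], simp)

lemma acd_u1: "acd S u1 u2"
  unfolding acd_def using continuous_on_subset[OF u1_cont] absint_u2 u1_int by auto

lemma acd_a: "acd S (u0 E) p" by (rule acd_C1[OF u0_deriv p_cont])
lemma acd_p: "acd S p pp" by (rule acd_C1[OF p_deriv pp_cont])

definition "q x = pp x / p x"
definition "r x = 3 * (u0 E x)\<^sup>2 - 1"
definition "w x = (if p x = 0 then 0 else u1 x - q x * u x)"
definition "w1 x = u2 x - r x * u x - q x * w x"
definition "hh x = u2 x - r x * u x"
definition "K0 x = (u2 x)\<^sup>2 + 5 * (u0 E x)\<^sup>2 * (u1 x)\<^sup>2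
        + (- 5 * (u0 E x)^4 + 15 * (u0 E x)\<^sup>2 - 4 + 3 * E\<^sup>2) * (u x)\<^sup>2"
definition "K2 x = (u1 x)\<^sup>2 + (3 * (u0 E x)\<^sup>2 - 1) * (u x)\<^sup>2"
definition "N0 x = (w1 x)\<^sup>2 + 3 * (w x)\<^sup>2 + 2 * E\<^sup>2 * (u0 E x * w x / p x)\<^sup>2"
definition "C1 x = 12 * (u0 E x * p x) - 10 * (u0 E x * u0 E x * q x)"
definition "Bf x = 1 / 2 * (C1 x * u x * u x) - 2 * (r x * u x * w x) - q x * w x * w x"
definition "B2f x = - (q x * u x * u x)"
definition "WW x = p x * u1 x - pp x * u x"

lemma meas_q [measurable]: "q \<in> borel_measurable lebesgue" unfolding q_def[abs_def] by measurable
lemma meas_r [measurable]: "r \<in> borel_measurable lebesgue" unfolding r_def[abs_def] by measurable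
lemma meas_w [measurable]: "w \<in> borel_measurable lebesgue" unfolding w_def[abs_def] by measurable
lemma meas_w1 [measurable]: "w1 \<in> borel_measurable lebesgue" unfolding w1_def[abs_def] by measurable
lemma meas_hh [measurable]: "hh \<in> borel_measurable lebesgue" unfolding hh_def[abs_def] by measurable

lemma K0_absint: "K0 absolutely_integrable_on UNIV"
proof -
  have ai: "(\<lambda>x. (f x)\<^sup>2) absolutely_integrable_on UNIV" if "(\<lambda>x. (f x)\<^sup>2) integrable_on UNIV" for f :: "real \<Rightarrow> real"
    using that by (rule nonnegative_absolutely_integrable_1) simp
  have bd: "(\<lambda>x. c x * (f x)\<^sup>2) absolutely_integrable_on UNIV"
    if "(\<lambda>x. (f x)\<^sup>2) integrable_on UNIV" "c \<in> borel_measurable lebesgue" "\<And>x. \<bar>c x\<bar> \<le> M"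
    for f c :: "real \<Rightarrow> real" and M
  proof (rule absolutely_integrable_bounded_measurable_product_real)
    show "c \<in> borel_measurable (lebesgue_on UNIV)" using that(2) by (simp add: lebesgue_on_UNIV_eq)
    show "bounded (c ` UNIV)" using that(3) by (auto simp: bounded_iff)
  qed (use ai[OF that(1)] in auto)
  have a4: "\<bar>- 5 * (u0 E x)^4 + 15 * (u0 E x)\<^sup>2 - 4 + 3 * E\<^sup>2\<bar> \<le> 30" for x
  proof -
    have "(u0 E x)\<^sup>2 \<le> 1" using u0_abs_le1[of x] by (simp add: abs_square_le_1)
    moreover have "(u0 E x)^4 = ((u0 E x)\<^sup>2)\<^sup>2" by simp
    moreover have "E\<^sup>2 \<le> 1" using E0 E1 by (simp add: abs_square_le_1)
    ultimately show ?thesis using zero_le_power2[of "u0 E x"] zero_le_power2[of "(u0 E x)\<^sup>2"] zero_le_power2[of E]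
      by (smt (verit) power2_le_imp_le power_one)
  qed
  have a2: "\<bar>5 * (u0 E x)\<^sup>2\<bar> \<le> 5" for x
    using u0_abs_le1[of x] by (simp add: abs_square_le_1)
  show ?thesis unfolding K0_def
    by (intro set_integral_add(1) ai int_u2sq bd[OF int_u1sq _ a2] bd[OF int_usq _ a4]) measurable
qed

lemma K2_absint: "K2 absolutely_integrable_on UNIV"
proof -
  have ai: "(\<lambda>x. (f x)\<^sup>2) absolutely_integrable_on UNIV" if "(\<lambda>x. (f x)\<^sup>2) integrable_on UNIV" for f :: "real \<Rightarrow> real"
    using that by (rule nonnegative_absolutely_integrable_1) simp
  have bd: "(\<lambda>x. c x * (f x)\<^sup>2) absolutely_integrable_on UNIV"
    if "(\<lambda>x. (f x)\<^sup>2) integrable_on UNIV" "c \<in> borel_measurable lebesgue" "\<And>x. \<bar>c x\<bar> \<le> M"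
    for f c :: "real \<Rightarrow> real" and M
  proof (rule absolutely_integrable_bounded_measurable_product_real)
    show "c \<in> borel_measurable (lebesgue_on UNIV)" using that(2) by (simp add: lebesgue_on_UNIV_eq)
    show "bounded (c ` UNIV)" using that(3) by (auto simp: bounded_iff)
  qed (use ai[OF that(1)] in auto)
  have a2: "\<bar>3 * (u0 E x)\<^sup>2 - 1\<bar> \<le> 4" for x
  proof -
    have "(u0 E x)\<^sup>2 \<le> 1" using u0_abs_le1[of x] by (simp add: abs_square_le_1)
    then show ?thesis using zero_le_power2[of "u0 E x"] unfolding abs_le_iff by linarith
  qed
  show ?thesis unfolding K2_def
    by (intro set_integral_add(1) ai int_u1sq bd[OF int_usq _ a2]) measurable
qed

end


lemma alg_B:
  fixes a p q u u1 u2 E w w1 r qd rd C1 C1d pp ew :: real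
  assumes "q * p = pp" "pp = - (1 - a\<^sup>2) * a" "2 * p\<^sup>2 = (1 - a\<^sup>2)\<^sup>2 - E\<^sup>2"
    "r = 3 * a\<^sup>2 - 1" "qd = r - q\<^sup>2" "rd = 6 * a * p" "C1 = 12 * (a * p) - 10 * (a * a * q)"
    "C1d = 12 * (p * p + a * pp) - 10 * ((p * a + a * p) * q + a * a * qd)"
    "w = u1 - q * u" "w1 = u2 - r * u - q * w" "ew = 2 * w\<^sup>2 * (q\<^sup>2 - 2 * a\<^sup>2)"
  shows "1 / 2 * ((C1d * u + C1 * u1) * u + C1 * u * u1) - 2 * ((rd * u + r * u1) * w + r * u * w1)
      - ((qd * w + q * w1) * w + q * w * w1)
    = (w1\<^sup>2 + 3 * w\<^sup>2 + ew) - (u2\<^sup>2 + 5 * a\<^sup>2 * u1\<^sup>2 + (- 5 * a ^ 4 + 15 * a\<^sup>2 - 4 + 3 * E\<^sup>2) * u\<^sup>2)"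
  unfolding assms(11) assms(10) assms(9) assms(8) assms(7) assms(6) assms(5) assms(4) assms(2)
  using assms(1)[unfolded assms(2)] assms(3) by algebra

lemma alg_B2:
  fixes a q u u1 w r qd :: real
  assumes "r = 3 * a\<^sup>2 - 1" "qd = r - q\<^sup>2" "w = u1 - q * u"
  shows "- 1 * ((qd * u + q * u1) * u + q * u * u1) = w\<^sup>2 - (u1\<^sup>2 + (3 * a\<^sup>2 - 1) * u\<^sup>2)"
  unfolding assms by (simp add: algebra_simps power2_eq_square)

context lmain
begin

definition "qd x = r x - (q x)\<^sup>2"
definition "rd x = 6 * u0 E x * p x"
definition "C1d x = 12 * (p x * p x + u0 E x * pp x) - 10 * ((p x * u0 E x + u0 E x * p x) * q x + u0 E x * u0 E x * qd x)"

lemma q_deriv: "p x \<noteq> 0 \<Longrightarrow> (q has_real_derivative qd x) (at x)"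
proof -
  assume px: "p x \<noteq> 0"
  have "((\<lambda>x. pp x / p x) has_real_derivative
      ((3 * (u0 E x)\<^sup>2 - 1) * p x * p x - pp x * pp x) / (p x * p x)) (at x)"
    by (rule DERIV_divide[OF ppp_deriv p_deriv px])
  moreover have "((3 * (u0 E x)\<^sup>2 - 1) * p x * p x - pp x * pp x) / (p x * p x) = qd x"
    unfolding qd_def r_def q_def using px by (simp add: field_simps power2_eq_square)
  ultimately show ?thesis unfolding q_def[abs_def] by simp
qed

context
  fixes S :: "real set"
  assumes pS: "\<And>x. x \<in> S \<Longrightarrow> p x \<noteq> 0"
begin

lemma qd_cont: "continuous_on S qd"
  unfolding qd_def[abs_def] r_def[abs_def] q_def[abs_def]
  by (intro continuous_intros u0_cont pp_cont p_cont) (use pS in auto)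

lemma acd_q: "acd S q qd"
  by (rule acd_C1[OF q_deriv[OF pS] qd_cont])

lemma acd_r: "acd S r rd"
proof (rule acd_cong[OF acd_diff[OF acd_cmult[OF acd_mult[OF acd_a acd_a], where c=3] acd_const[of S 1]]])
  show "3 * (u0 E x * u0 E x) - 1 = r x" for x unfolding r_def by (simp add: power2_eq_square)
  show "3 * (p x * u0 E x + u0 E x * p x) - 0 = rd x" for x unfolding rd_def by (simp add: algebra_simps)
qed

lemma acd_w: "acd S w w1"
proof (rule acd_cong[OF acd_diff[OF acd_u1 acd_mult[OF acd_q acd_u]]])
  fix x assume x: "x \<in> S"
  show "u1 x - q x * u x = w x" unfolding w_def using pS[OF x] by simp
  show "u2 x - (qd x * u x + q x * u1 x) = w1 x"
    unfolding w1_def w_def qd_def using pS[OF x] by (simp add: algebra_simps power2_eq_square)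
qed

lemma acd_C1': "acd S C1 C1d"
proof (rule acd_cong[OF acd_diff[OF acd_cmult[OF acd_mult[OF acd_a acd_p], where c=12]
        acd_cmult[OF acd_mult[OF acd_mult[OF acd_a acd_a] acd_q], where c=10]]])
  show "12 * (u0 E x * p x) - 10 * (u0 E x * u0 E x * q x) = C1 x" for x unfolding C1_def ..
  show "12 * (p x * p x + u0 E x * pp x) - 10 * ((p x * u0 E x + u0 E x * p x) * q x + u0 E x * u0 E x * qd x) = C1d x"
    for x unfolding C1d_def ..
qed

lemma ew_eq: "p x \<noteq> 0 \<Longrightarrow> 2 * E\<^sup>2 * (u0 E x * w x / p x)\<^sup>2 = 2 * (w x)\<^sup>2 * ((q x)\<^sup>2 - 2 * (u0 E x)\<^sup>2)"
proof -
  assume px: "p x \<noteq> 0"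
  have P2: "2 * (p x)\<^sup>2 = (1 - (u0 E x)\<^sup>2)\<^sup>2 - E\<^sup>2" using p_sq[of x] by simp
  have pp2: "(pp x)\<^sup>2 = (1 - (u0 E x)\<^sup>2)\<^sup>2 * (u0 E x)\<^sup>2"
    unfolding pp_def power_mult_distrib power2_minus by (rule refl)
  have "(q x)\<^sup>2 = (1 - (u0 E x)\<^sup>2)\<^sup>2 * (u0 E x)\<^sup>2 / (p x)\<^sup>2"
    unfolding q_def power_divide pp2 ..
  also have "\<dots> = (2 * (p x)\<^sup>2 + E\<^sup>2) * (u0 E x)\<^sup>2 / (p x)\<^sup>2" using P2 by simp
  also have "\<dots> = 2 * (u0 E x)\<^sup>2 + E\<^sup>2 * (u0 E x)\<^sup>2 / (p x)\<^sup>2" using px by (simp add: field_simps)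
  finally have h: "E\<^sup>2 * (u0 E x)\<^sup>2 / (p x)\<^sup>2 = (q x)\<^sup>2 - 2 * (u0 E x)\<^sup>2" by simp
  have "2 * E\<^sup>2 * (u0 E x * w x / p x)\<^sup>2 = 2 * (w x)\<^sup>2 * (E\<^sup>2 * (u0 E x)\<^sup>2 / (p x)\<^sup>2)"
    by (simp add: power_divide power_mult_distrib)
  then show ?thesis using h by simp
qed

lemma acd_B: "acd S Bf (\<lambda>x. N0 x - K0 x)"
proof (rule acd_cong[OF acd_diff[OF acd_diff[OF acd_cmult[OF acd_mult[OF acd_mult[OF acd_C1' acd_u] acd_u], where c="1/2"]
          acd_cmult[OF acd_mult[OF acd_mult[OF acd_r acd_u] acd_w], where c=2]]
          acd_mult[OF acd_mult[OF acd_q acd_w] acd_w]]])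
  show "1 / 2 * (C1 x * u x * u x) - 2 * (r x * u x * w x) - q x * w x * w x = Bf x" for x
    unfolding Bf_def ..
  fix x assume x: "x \<in> S"
  have px: "p x \<noteq> 0" using pS[OF x] .
  show "1 / 2 * ((C1d x * u x + C1 x * u1 x) * u x + C1 x * u x * u1 x)
      - 2 * ((rd x * u x + r x * u1 x) * w x + r x * u x * w1 x)
      - ((qd x * w x + q x * w1 x) * w x + q x * w x * w1 x) = N0 x - K0 x"
    unfolding N0_def K0_def
  proof (rule alg_B)
    show "q x * p x = pp x" unfolding q_def using px by simp
    show "pp x = - (1 - (u0 E x)\<^sup>2) * u0 E x" unfolding pp_def ..
    show "2 * (p x)\<^sup>2 = (1 - (u0 E x)\<^sup>2)\<^sup>2 - E\<^sup>2" using p_sq[of x] by simp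
    show "r x = 3 * (u0 E x)\<^sup>2 - 1" unfolding r_def ..
    show "qd x = r x - (q x)\<^sup>2" unfolding qd_def ..
    show "rd x = 6 * u0 E x * p x" unfolding rd_def ..
    show "C1 x = 12 * (u0 E x * p x) - 10 * (u0 E x * u0 E x * q x)" unfolding C1_def ..
    show "C1d x = 12 * (p x * p x + u0 E x * pp x) - 10 * ((p x * u0 E x + u0 E x * p x) * q x + u0 E x * u0 E x * qd x)"
      unfolding C1d_def ..
    show "w x = u1 x - q x * u x" unfolding w_def using px by simp
    show "w1 x = u2 x - r x * u x - q x * w x" unfolding w1_def ..
    show "2 * E\<^sup>2 * (u0 E x * w x / p x)\<^sup>2 = 2 * (w x)\<^sup>2 * ((q x)\<^sup>2 - 2 * (u0 E x)\<^sup>2)"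
      using ew_eq[OF px] .
  qed
qed

lemma acd_B2: "acd S B2f (\<lambda>x. (w x)\<^sup>2 - K2 x)"
proof (rule acd_cong[OF acd_cmult[OF acd_mult[OF acd_mult[OF acd_q acd_u] acd_u], where c="-1"]])
  show "- 1 * (q x * u x * u x) = B2f x" for x unfolding B2f_def by simp
  fix x assume x: "x \<in> S"
  show "- 1 * ((qd x * u x + q x * u1 x) * u x + q x * u x * u1 x) = (w x)\<^sup>2 - K2 x"
    unfolding K2_def
    by (rule alg_B2) (use pS[OF x] in \<open>auto simp: r_def qd_def w_def\<close>)
qed

end

lemma p_piece: "x \<in> {zz n<..<zz (n + 1)} \<Longrightarrow> p x \<noteq> 0"
  using p_nonzero_between by auto

lemmas acd_B_piece = acd_B[OF p_piece]
lemmas acd_B2_piece = acd_B2[OF p_piece]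
lemmas acd_w_piece = acd_w[OF p_piece]

end


lemma mvt_abs_bound:
  fixes f f' :: "real \<Rightarrow> real"
  assumes d: "\<And>t. (f has_real_derivative f' t) (at t)"
    and bd: "\<And>t. min a b \<le> t \<Longrightarrow> t \<le> max a b \<Longrightarrow> \<bar>f' t\<bar> \<le> M"
  shows "\<bar>f b - f a\<bar> \<le> M * \<bar>b - a\<bar>"
proof (cases a b rule: linorder_cases)
  case less
  then obtain \<xi> where \<xi>: "a < \<xi>" "\<xi> < b" "f b - f a = (b - a) * f' \<xi>"
    using MVT2[OF less d] by blast
  have "\<bar>f' \<xi>\<bar> \<le> M" using bd \<xi> less by auto
  have "\<bar>f b - f a\<bar> = \<bar>b - a\<bar> * \<bar>f' \<xi>\<bar>" using \<xi> by (simp add: abs_mult)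
  also have "\<dots> \<le> \<bar>b - a\<bar> * M" using \<open>\<bar>f' \<xi>\<bar> \<le> M\<close> by (intro mult_left_mono) auto
  finally show ?thesis by (simp add: mult.commute)
next
  case equal then show ?thesis by simp
next
  case greater
  then obtain \<xi> where \<xi>: "b < \<xi>" "\<xi> < a" "f a - f b = (a - b) * f' \<xi>"
    using MVT2[OF greater d] by blast
  have "\<bar>f' \<xi>\<bar> \<le> M" using bd \<xi> greater by auto
  have "\<bar>f b - f a\<bar> = \<bar>a - b\<bar> * \<bar>f' \<xi>\<bar>" using \<xi> by (simp add: abs_mult abs_minus_commute)
  also have "\<dots> \<le> \<bar>a - b\<bar> * M" using \<open>\<bar>f' \<xi>\<bar> \<le> M\<close> by (intro mult_left_mono) auto
  finally show ?thesis by (simp add: mult.commute abs_minus_commute)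
qed

lemma prod_le: "\<bar>x\<bar> \<le> (X::real) \<Longrightarrow> \<bar>y\<bar> \<le> Y \<Longrightarrow> \<bar>x * y\<bar> \<le> X * Y"
  unfolding abs_mult by (rule mult_mono) auto

lemma cs_ineq:
  fixes f :: "real \<Rightarrow> real"
  assumes ab: "a \<le> b" and fi: "f absolutely_integrable_on {a..b}" and f2: "(\<lambda>x. (f x)\<^sup>2) integrable_on {a..b}"
  shows "(integral {a..b} (\<lambda>x. \<bar>f x\<bar>))\<^sup>2 \<le> (b - a) * integral {a..b} (\<lambda>x. (f x)\<^sup>2)"
proof (cases "a = b")
  case True then show ?thesis by simp
next
  case False
  define J where "J = integral {a..b} (\<lambda>x. \<bar>f x\<bar>)"
  define S where "S = integral {a..b} (\<lambda>x. (f x)\<^sup>2)"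
  define L where "L = b - a"
  have L: "L > 0" using ab False unfolding L_def by auto
  define c where "c = J / L"
  have ai: "(\<lambda>x. \<bar>f x\<bar>) integrable_on {a..b}" using fi unfolding absolutely_integrable_on_def by simp
  have le: "integral {a..b} (\<lambda>x. 2 * c * \<bar>f x\<bar>) \<le> integral {a..b} (\<lambda>x. c\<^sup>2 + (f x)\<^sup>2)"
  proof (rule integral_le)
    show "(\<lambda>x. 2 * c * \<bar>f x\<bar>) integrable_on {a..b}" using ai by (rule integrable_on_mult_right)
    show "(\<lambda>x. c\<^sup>2 + (f x)\<^sup>2) integrable_on {a..b}" using integrable_add[OF integrable_const_ivl f2] .
    fix x have "0 \<le> (\<bar>f x\<bar> - c)\<^sup>2" by simp
    then show "2 * c * \<bar>f x\<bar> \<le> c\<^sup>2 + (f x)\<^sup>2" by (simp add: power2_eq_square algebra_simps)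
  qed
  have e1: "integral {a..b} (\<lambda>x. 2 * c * \<bar>f x\<bar>) = 2 * c * J" unfolding J_def by (rule integral_mult_right)
  have e2: "integral {a..b} (\<lambda>x. c\<^sup>2 + (f x)\<^sup>2) = c\<^sup>2 * L + S"
    unfolding S_def L_def using integral_add[OF integrable_const_ivl f2] ab by (simp add: mult.commute)
  have "2 * c * J \<le> c\<^sup>2 * L + S" using le unfolding e1 e2 .
  then have "2 * J * J / L \<le> J * J / L + S" unfolding c_def using L by (simp add: power2_eq_square field_simps)
  then have "J * J / L \<le> S" by simp
  then have "J * J \<le> L * S" using L by (simp add: field_simps)
  then show ?thesis unfolding J_def[symmetric] S_def[symmetric] L_def[symmetric] by (simp add: power2_eq_square)
qed

lemma int_shrink:
  fixes f :: "real \<Rightarrow> real"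
  assumes fi: "\<And>c d. f integrable_on {c..d}"
  shows "((\<lambda>y. integral {min z y..max z y} f) \<longlongrightarrow> 0) (at z)"
proof -
  define G where "G t = integral {z - 1..t} f" for t
  have "continuous_on {z - 1..z + 1} G" unfolding G_def by (rule indefinite_integral_continuous_1) (rule fi)
  then have "continuous (at z) G" by (rule continuous_on_interior) simp
  then have "(G \<longlongrightarrow> G z) (at z)" by (simp add: continuous_at)
  then have "((\<lambda>y. G y - G z) \<longlongrightarrow> G z - G z) (at z)" by (intro tendsto_intros)
  then have lim: "((\<lambda>y. \<bar>G y - G z\<bar>) \<longlongrightarrow> 0) (at z)" using tendsto_rabs_zero by force
  have ev: "eventually (\<lambda>y. norm (integral {min z y..max z y} f) \<le> \<bar>G y - G z\<bar>) (at z)"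
    unfolding eventually_at
  proof (intro exI[of _ 1] conjI ballI impI)
    fix y :: real assume y: "y \<noteq> z \<and> dist y z < 1"
    show "norm (integral {min z y..max z y} f) \<le> \<bar>G y - G z\<bar>"
    proof (cases "z \<le> y")
      case True
      have "integral {z - 1..z} f + integral {z..y} f = integral {z - 1..y} f"
        by (rule Henstock_Kurzweil_Integration.integral_combine) (use True in \<open>auto intro: fi\<close>)
      then show ?thesis using True unfolding G_def by auto
    next
      case False
      have "integral {z - 1..y} f + integral {y..z} f = integral {z - 1..z} f"
        using y False by (intro Henstock_Kurzweil_Integration.integral_combine) (auto simp: dist_real_def intro: fi)
      then show ?thesis using False unfolding G_def by auto
    qed
  qed simp
  show ?thesis by (rule Lim_null_comparison[OF ev lim])
qed

context lmain
begin

lemma acd_pp: "acd S pp (\<lambda>x. r x * p x)"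
proof (rule acd_C1)
  show "(pp has_real_derivative r x * p x) (at x)" for x using ppp_deriv[of x] unfolding r_def .
  show "continuous_on S (\<lambda>x. r x * p x)" unfolding r_def[abs_def] by (intro continuous_intros u0_cont p_cont)
qed

lemma acd_WW: "acd S WW (\<lambda>x. p x * hh x)"
proof (rule acd_cong[OF acd_diff[OF acd_mult[OF acd_p acd_u1] acd_mult[OF acd_pp acd_u]]])
  show "p x * u1 x - pp x * u x = WW x" for x unfolding WW_def ..
  show "pp x * u1 x + p x * u2 x - (r x * p x * u x + pp x * u1 x) = p x * hh x" for x
    unfolding hh_def by (simp add: algebra_simps)
qed

lemma r_cont: "continuous_on S r" unfolding r_def[abs_def] by (intro continuous_intros u0_cont)

lemma hh_absint: "hh absolutely_integrable_on {c..d}"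
proof -
  have "(\<lambda>x. r x * u x) absolutely_integrable_on {c..d}"
    by (rule absolutely_integrable_continuous_real) (intro continuous_intros r_cont continuous_on_subset[OF u_cont], simp)
  then show ?thesis unfolding hh_def[abs_def] by (rule set_integral_diff(1)[OF absint_u2])
qed

lemma hh2_int: "(\<lambda>x. (hh x)\<^sup>2) integrable_on {c..d}"
proof -
  have "(\<lambda>x. (hh x)\<^sup>2) absolutely_integrable_on {c..d}"
  proof (rule nonneg_bound_int)
    show "(\<lambda>x. (hh x)\<^sup>2) \<in> borel_measurable lebesgue" by measurable
    have c: "(\<lambda>x. 2 * (r x * u x)\<^sup>2) integrable_on {c..d}"
      by (rule integrable_continuous_real) (intro continuous_intros r_cont continuous_on_subset[OF u_cont], simp)
    have "(\<lambda>x. 2 * (u2 x)\<^sup>2) integrable_on {c..d}"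
      by (intro integrable_on_mult_right integrable_on_subinterval[OF int_u2sq]) auto
    from integrable_add[OF this c]
    show "(\<lambda>x. 2 * (u2 x)\<^sup>2 + 2 * (r x * u x)\<^sup>2) integrable_on {c..d}" .
    fix x
    have "2 * (u2 x)\<^sup>2 + 2 * (r x * u x)\<^sup>2 - (hh x)\<^sup>2 = (u2 x + r x * u x)\<^sup>2"
      unfolding hh_def by (simp add: power2_eq_square algebra_simps)
    then show "\<bar>(hh x)\<^sup>2\<bar> \<le> 2 * (u2 x)\<^sup>2 + 2 * (r x * u x)\<^sup>2"
      using zero_le_power2[of "u2 x + r x * u x"] unfolding abs_power2 by linarith
  qed auto
  then show ?thesis using set_lebesgue_integral_eq_integral(1) by blast
qed

lemma hhabs_int: "(\<lambda>x. \<bar>hh x\<bar>) integrable_on {c..d}"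
  using hh_absint unfolding absolutely_integrable_on_def by simp

lemma w_eq: "p y \<noteq> 0 \<Longrightarrow> w y = WW y / p y"
  unfolding w_def WW_def q_def by (simp add: field_simps)

lemma r_bound: "\<bar>r x\<bar> \<le> 2"
proof -
  have "(u0 E x)\<^sup>2 \<le> 1" using u0_abs_le1[of x] by (simp add: abs_square_le_1)
  then show ?thesis unfolding r_def using zero_le_power2[of "u0 E x"] unfolding abs_le_iff by linarith
qed

lemma C1_bound: "\<bar>C1 x\<bar> \<le> 12 + 10 * \<bar>q x\<bar>"
proof -
  have a: "\<bar>u0 E x\<bar> \<le> 1" by (rule u0_abs_le1)
  have "\<bar>u0 E x * p x\<bar> \<le> 1 * 1" by (rule prod_le[OF a p_bound])
  moreover have "\<bar>u0 E x * u0 E x * q x\<bar> \<le> 1 * 1 * \<bar>q x\<bar>" by (rule prod_le[OF prod_le[OF a a]]) simp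
  ultimately show ?thesis unfolding C1_def by (simp add: abs_le_iff)
qed

context
  fixes z assumes pz: "p z = 0"
begin

lemma uz0: "u z = 0" by (rule uz[OF pz])

lemma ppz: "pp z \<noteq> 0"
proof -
  obtain n where "z = zz n" using pz p_zero_iff_zz by blast
  then show ?thesis using pp_zz by simp
qed

definition "m = \<bar>pp z\<bar> / 2"
lemma m_pos: "m > 0" unfolding m_def using ppz by simp

lemma p_lower: "\<exists>\<delta>>0. \<forall>y. y \<noteq> z \<and> \<bar>y - z\<bar> < \<delta> \<longrightarrow> m * \<bar>y - z\<bar> \<le> \<bar>p y\<bar>"
proof -
  have "(\<lambda>h. (p (z + h) - p z) / h) \<midarrow>0\<rightarrow> pp z" using p_deriv[of z] unfolding DERIV_def .
  from LIM_D[OF this m_pos] obtain s where s: "s > 0"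
    "\<forall>h. h \<noteq> 0 \<and> norm (h - 0) < s \<longrightarrow> norm ((p (z + h) - p z) / h - pp z) < m" by blast
  show ?thesis
  proof (intro exI[of _ s] conjI allI impI)
    fix y assume y: "y \<noteq> z \<and> \<bar>y - z\<bar> < s"
    then have "\<bar>p y / (y - z) - pp z\<bar> < m" using s(2)[rule_format, of "y - z"] pz by simp
    then have "\<bar>pp z\<bar> - m \<le> \<bar>p y / (y - z)\<bar>" by linarith
    then have "m \<le> \<bar>p y\<bar> / \<bar>y - z\<bar>" unfolding m_def by (simp add: abs_divide)
    then show "m * \<bar>y - z\<bar> \<le> \<bar>p y\<bar>" using y by (simp add: field_simps)
  qed (use s in auto)
qed

lemma p_upper: "\<bar>p y\<bar> \<le> \<bar>y - z\<bar>"
  using mvt_abs_bound[of p pp z y 1, OF p_deriv pp_bound] pz by simp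

lemma u1_bounded: "\<exists>U\<ge>0. \<forall>t\<in>{z - 1..z + 1}. \<bar>u1 t\<bar> \<le> U"
proof -
  have "bounded (u1 ` {z - 1..z + 1})"
    by (intro compact_imp_bounded compact_continuous_image continuous_on_subset[OF u1_cont]) auto
  then obtain B where "\<forall>t\<in>{z - 1..z + 1}. \<bar>u1 t\<bar> \<le> B" unfolding bounded_iff by auto
  then show ?thesis by (intro exI[of _ "\<bar>B\<bar>"]) force
qed

definition "Uz = (SOME U. U \<ge> 0 \<and> (\<forall>t\<in>{z - 1..z + 1}. \<bar>u1 t\<bar> \<le> U))"
lemma Uz: "Uz \<ge> 0" "\<And>t. t \<in> {z - 1..z + 1} \<Longrightarrow> \<bar>u1 t\<bar> \<le> Uz"
  using someI_ex[OF u1_bounded[unfolded Bex_def]] unfolding Uz_def by blast+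

lemma u_small: "\<bar>y - z\<bar> \<le> 1 \<Longrightarrow> \<bar>u y\<bar> \<le> Uz * \<bar>y - z\<bar>"
proof -
  assume y: "\<bar>y - z\<bar> \<le> 1"
  have "\<bar>u y - u z\<bar> \<le> Uz * \<bar>y - z\<bar>"
    by (rule mvt_abs_bound[OF u_deriv]) (use y in \<open>auto intro!: Uz(2)\<close>)
  then show ?thesis using uz0 by simp
qed

definition "Jz y = integral {min z y..max z y} (\<lambda>t. \<bar>hh t\<bar>)"
definition "Sz y = integral {min z y..max z y} (\<lambda>t. (hh t)\<^sup>2)"

lemma WW_bound: "\<bar>WW y\<bar> \<le> \<bar>y - z\<bar> * Jz y"
proof -
  have WWz: "WW z = 0" unfolding WW_def using pz uz0 by simp
  have bnd: "\<bar>integral {min z y..max z y} (\<lambda>t. p t * hh t)\<bar> \<le> \<bar>y - z\<bar> * Jz y"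
  proof -
    have "norm (integral {min z y..max z y} (\<lambda>t. p t * hh t)) \<le> integral {min z y..max z y} (\<lambda>t. \<bar>y - z\<bar> * \<bar>hh t\<bar>)"
    proof (rule integral_norm_bound_integral)
      have mm: "min z y \<le> max z y" by simp
      show "(\<lambda>t. p t * hh t) integrable_on {min z y..max z y}"
        using has_integral_integrable[OF acdD(2)[OF acd_WW mm subset_UNIV]] .
      show "(\<lambda>t. \<bar>y - z\<bar> * \<bar>hh t\<bar>) integrable_on {min z y..max z y}"
        by (intro integrable_on_mult_right hhabs_int)
      fix t assume t: "t \<in> {min z y..max z y}"
      have "\<bar>p t\<bar> \<le> \<bar>y - z\<bar>" using p_upper[of t] t by (auto simp: abs_le_iff)
      then show "norm (p t * hh t) \<le> \<bar>y - z\<bar> * \<bar>hh t\<bar>"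
        by (simp add: abs_mult mult_right_mono)
    qed
    then show ?thesis unfolding Jz_def by simp
  qed
  show ?thesis
  proof (cases "z \<le> y")
    case True
    have "((\<lambda>t. p t * hh t) has_integral WW y - WW z) {z..y}" using acdD(2)[OF acd_WW[of UNIV] True] by simp
    then have "WW y = integral {min z y..max z y} (\<lambda>t. p t * hh t)" using True WWz by (simp add: integral_unique)
    then show ?thesis using bnd by simp
  next
    case False
    then have le: "y \<le> z" by simp
    have "((\<lambda>t. p t * hh t) has_integral WW z - WW y) {y..z}" using acdD(2)[OF acd_WW[of UNIV] le] by simp
    then have "- WW y = integral {min z y..max z y} (\<lambda>t. p t * hh t)" using le WWz by (simp add: integral_unique)
    then show ?thesis using bnd by simp
  qed
qed

lemma Jz_cs: "(Jz y)\<^sup>2 \<le> \<bar>y - z\<bar> * Sz y"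
proof -
  have "(Jz y)\<^sup>2 \<le> (max z y - min z y) * Sz y"
    unfolding Jz_def Sz_def by (rule cs_ineq[OF _ hh_absint hh2_int]) simp
  moreover have "max z y - min z y = \<bar>y - z\<bar>" by (simp add: abs_if max_def min_def)
  ultimately show ?thesis by simp
qed

lemma Jz_lim: "(Jz \<longlongrightarrow> 0) (at z)" unfolding Jz_def[abs_def] by (rule int_shrink[OF hhabs_int])
lemma Sz_lim: "(Sz \<longlongrightarrow> 0) (at z)" unfolding Sz_def[abs_def] by (rule int_shrink[OF hh2_int])
lemma dist_lim: "((\<lambda>y. \<bar>y - z\<bar>) \<longlongrightarrow> 0) (at z)"
proof -
  have "((\<lambda>y. y - z) \<longlongrightarrow> z - z) (at z)" by (intro tendsto_intros)
  then show ?thesis using tendsto_rabs_zero by force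
qed

lemma Jz_nonneg: "Jz y \<ge> 0" unfolding Jz_def by (rule integral_nonneg[OF hhabs_int]) simp

lemma near_z: "eventually (\<lambda>y. y \<noteq> z \<and> p y \<noteq> 0 \<and> \<bar>q y\<bar> * (m * \<bar>y - z\<bar>) \<le> 1 \<and> \<bar>w y\<bar> \<le> Jz y / m
     \<and> \<bar>u y\<bar> \<le> Uz * \<bar>y - z\<bar>) (at z)"
proof -
  obtain \<delta> where d: "\<delta> > 0" "\<forall>y. y \<noteq> z \<and> \<bar>y - z\<bar> < \<delta> \<longrightarrow> m * \<bar>y - z\<bar> \<le> \<bar>p y\<bar>"
    using p_lower by blast
  have main: "\<forall>y. y \<noteq> z \<and> dist y z < min \<delta> 1 \<longrightarrow> y \<noteq> z \<and> p y \<noteq> 0 \<and> \<bar>q y\<bar> * (m * \<bar>y - z\<bar>) \<le> 1 \<and> \<bar>w y\<bar> \<le> Jz y / m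
     \<and> \<bar>u y\<bar> \<le> Uz * \<bar>y - z\<bar>"
  proof (intro allI impI)
    fix y assume y: "y \<noteq> z \<and> dist y z < min \<delta> 1"
    then have y1: "y \<noteq> z" "\<bar>y - z\<bar> < \<delta>" "\<bar>y - z\<bar> < 1" by (auto simp: dist_real_def)
    have lo: "m * \<bar>y - z\<bar> \<le> \<bar>p y\<bar>" using d(2) y1 by blast
    have mpos: "m * \<bar>y - z\<bar> > 0" using m_pos y1 by simp
    then have py: "p y \<noteq> 0" using lo by auto
    have "\<bar>q y\<bar> * (m * \<bar>y - z\<bar>) \<le> \<bar>q y\<bar> * \<bar>p y\<bar>" using lo by (intro mult_left_mono) auto
    also have "\<dots> = \<bar>pp y\<bar>" unfolding q_def using py by (simp add: abs_divide)
    also have "\<dots> \<le> 1" by (rule pp_bound)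
    finally have hq: "\<bar>q y\<bar> * (m * \<bar>y - z\<bar>) \<le> 1" .
    have "\<bar>w y\<bar> = \<bar>WW y\<bar> / \<bar>p y\<bar>" using w_eq[OF py] by (simp add: abs_divide)
    also have "\<dots> \<le> (\<bar>y - z\<bar> * Jz y) / (m * \<bar>y - z\<bar>)"
      by (rule frac_le) (use WW_bound[of y] mpos lo Jz_nonneg[of y] in auto)
    also have "\<dots> = Jz y / m" using y1 m_pos by (simp add: field_simps)
    finally have hw: "\<bar>w y\<bar> \<le> Jz y / m" .
    have hu: "\<bar>u y\<bar> \<le> Uz * \<bar>y - z\<bar>" by (rule u_small) (use y1 in auto)
    show "y \<noteq> z \<and> p y \<noteq> 0 \<and> \<bar>q y\<bar> * (m * \<bar>y - z\<bar>) \<le> 1 \<and> \<bar>w y\<bar> \<le> Jz y / m \<and> \<bar>u y\<bar> \<le> Uz * \<bar>y - z\<bar>"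
      using y1 py hq hw hu by blast
  qed
  show ?thesis unfolding eventually_at using d(1) main by (intro exI[of _ "min \<delta> 1"]) auto
qed

lemma w_lim: "(w \<longlongrightarrow> 0) (at z)"
proof (rule Lim_null_comparison)
  show "eventually (\<lambda>y. norm (w y) \<le> Jz y / m) (at z)"
    using near_z by eventually_elim auto
  show "((\<lambda>y. Jz y / m) \<longlongrightarrow> 0) (at z)" using tendsto_divide[OF Jz_lim tendsto_const, of m] m_pos by simp
qed

lemma B2_lim: "(B2f \<longlongrightarrow> 0) (at z)"
proof (rule Lim_null_comparison)
  show "eventually (\<lambda>y. norm (B2f y) \<le> Uz * Uz * \<bar>y - z\<bar> / m) (at z)"
    using near_z
  proof eventually_elim
    case (elim y)
    define d where "d = \<bar>y - z\<bar>"
    have d: "d > 0" using elim unfolding d_def by auto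
    have hq: "\<bar>q y\<bar> \<le> 1 / (m * d)" using elim d m_pos unfolding d_def[symmetric] by (simp add: field_simps)
    have hu: "\<bar>u y\<bar> \<le> Uz * d" using elim unfolding d_def by simp
    have "\<bar>q y * u y * u y\<bar> \<le> 1 / (m * d) * (Uz * d) * (Uz * d)"
      by (intro prod_le hq hu)
    also have "\<dots> = Uz * Uz * d / m" using d m_pos by (simp add: field_simps)
    finally show ?case unfolding B2f_def d_def by simp
  qed
  have "((\<lambda>y. Uz * Uz * \<bar>y - z\<bar> / m) \<longlongrightarrow> Uz * Uz * 0 / m) (at z)"
    by (intro tendsto_intros dist_lim) (use m_pos in simp)
  then show "((\<lambda>y. Uz * Uz * \<bar>y - z\<bar> / m) \<longlongrightarrow> 0) (at z)" by simp
qed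

lemma B_lim: "(Bf \<longlongrightarrow> 0) (at z)"
proof (rule Lim_null_comparison)
  define \<Phi> where "\<Phi> y = 6 * Uz * Uz * \<bar>y - z\<bar> * \<bar>y - z\<bar> + 5 * Uz * Uz * \<bar>y - z\<bar> / m
      + 4 * Uz * \<bar>y - z\<bar> * Jz y / m + Sz y / (m * m * m)" for y
  show "eventually (\<lambda>y. norm (Bf y) \<le> \<Phi> y) (at z)"
    using near_z
  proof eventually_elim
    case (elim y)
    define d where "d = \<bar>y - z\<bar>"
    have d: "d > 0" using elim unfolding d_def by auto
    have hq: "\<bar>q y\<bar> \<le> 1 / (m * d)" using elim d m_pos unfolding d_def[symmetric] by (simp add: field_simps)
    have hu: "\<bar>u y\<bar> \<le> Uz * d" using elim unfolding d_def by simp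
    have hw: "\<bar>w y\<bar> \<le> Jz y / m" using elim by simp
    have t1: "\<bar>C1 y * u y * u y\<bar> \<le> (12 + 10 * (1 / (m * d))) * (Uz * d) * (Uz * d)"
    proof (intro prod_le hu)
      show "\<bar>C1 y\<bar> \<le> 12 + 10 * (1 / (m * d))" using C1_bound[of y] hq by linarith
    qed
    have t1': "(12 + 10 * (1 / (m * d))) * (Uz * d) * (Uz * d) = 12 * Uz * Uz * d * d + 10 * Uz * Uz * d / m"
      using d m_pos by (simp add: field_simps)
    have t2: "\<bar>r y * u y * w y\<bar> \<le> 2 * (Uz * d) * (Jz y / m)"
      by (intro prod_le r_bound hu hw)
    have t3: "\<bar>q y * w y * w y\<bar> \<le> 1 / (m * d) * (Jz y / m) * (Jz y / m)"
      by (intro prod_le hq hw)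
    have t3': "1 / (m * d) * (Jz y / m) * (Jz y / m) \<le> Sz y / (m * m * m)"
    proof -
      have "1 / (m * d) * (Jz y / m) * (Jz y / m) = (Jz y)\<^sup>2 / d / (m * m * m)"
        using d m_pos by (simp add: field_simps power2_eq_square)
      also have "\<dots> \<le> (d * Sz y) / d / (m * m * m)"
        using Jz_cs[of y] d m_pos unfolding d_def[symmetric] by (intro divide_right_mono) auto
      also have "\<dots> = Sz y / (m * m * m)" using d by simp
      finally show ?thesis .
    qed
    have tri: "\<bar>1 / 2 * X - 2 * Y - Z\<bar> \<le> 1 / 2 * \<bar>X\<bar> + 2 * \<bar>Y\<bar> + \<bar>Z\<bar>" for X Y Z :: real
      by arith
    have bf1: "\<bar>Bf y\<bar> \<le> 1 / 2 * \<bar>C1 y * u y * u y\<bar> + 2 * \<bar>r y * u y * w y\<bar> + \<bar>q y * w y * w y\<bar>"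
      unfolding Bf_def by (rule tri)
    have e1: "1 / 2 * (12 * Uz * Uz * d * d + 10 * Uz * Uz * d / m) = 6 * Uz * Uz * d * d + 5 * Uz * Uz * d / m"
      by simp
    have e2: "2 * (2 * (Uz * d) * (Jz y / m)) = 4 * Uz * d * Jz y / m" by simp
    have "\<bar>Bf y\<bar> \<le> \<Phi> y"
      unfolding \<Phi>_def d_def[symmetric] using bf1 t1 t1' t2 t3 t3' e1 e2 by linarith
    then show ?case by simp
  qed
  have "(\<Phi> \<longlongrightarrow> 6 * Uz * Uz * 0 * 0 + 5 * Uz * Uz * 0 / m + 4 * Uz * 0 * 0 / m + 0 / (m * m * m)) (at z)"
    unfolding \<Phi>_def by (intro tendsto_intros dist_lim Jz_lim Sz_lim) (use m_pos in auto)
  then show "(\<Phi> \<longlongrightarrow> 0) (at z)" by simp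
qed

lemma w_z: "w z = 0" unfolding w_def using pz by simp

lemma w_isCont_z: "isCont w z"
  using w_lim w_z by (simp add: continuous_at)

end

end


lemma piece_lim:
  fixes f g B :: "real \<Rightarrow> real" and z z' :: real
  assumes zz': "z < z'"
    and I: "\<And>\<alpha> \<beta>. z < \<alpha> \<Longrightarrow> \<alpha> \<le> \<beta> \<Longrightarrow> \<beta> < z' \<Longrightarrow> ((\<lambda>x. f x - g x) has_integral B \<beta> - B \<alpha>) {\<alpha>..\<beta>}"
    and f0: "\<And>x. z < x \<Longrightarrow> x < z' \<Longrightarrow> 0 \<le> f x"
    and gi: "g integrable_on {z..z'}"
    and Bl: "(B \<longlongrightarrow> 0) (at z)" and Br: "(B \<longlongrightarrow> 0) (at z')"
  shows "(f has_integral integral {z..z'} g) {z..z'}"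
proof -
  define L where "L = z' - z"
  have L: "L > 0" using zz' unfolding L_def by simp
  define d where "d k = L / (3 + real k)" for k :: nat
  define \<alpha> where "\<alpha> k = z + d k" for k
  define \<beta> where "\<beta> k = z' - d k" for k
  have d_pos: "d k > 0" for k unfolding d_def using L by simp
  have d_small: "d k \<le> L / 3" for k unfolding d_def using L by (intro divide_left_mono) auto
  have d_mono: "d (Suc k) \<le> d k" for k unfolding d_def using L by (intro divide_left_mono) auto
  have d_lim: "d \<longlonglongrightarrow> 0"
    unfolding d_def
    by (intro tendsto_divide_0[OF tendsto_const] filterlim_at_top_imp_at_infinity
        filterlim_tendsto_add_at_top[OF tendsto_const filterlim_real_sequentially])
  have ab: "z < \<alpha> k" "\<alpha> k < \<beta> k" "\<beta> k < z'" for k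
    unfolding \<alpha>_def \<beta>_def using d_pos[of k] d_small[of k] L unfolding L_def by auto
  have gsub: "g integrable_on {c..e}" if "z \<le> c" "e \<le> z'" for c e
    by (rule integrable_on_subinterval[OF gi]) (use that in auto)
  define F where "F k x = (if x \<in> {\<alpha> k..\<beta> k} then f x else 0)" for k x
  define X where "X k = B (\<beta> k) - B (\<alpha> k) + integral {\<alpha> k..\<beta> k} g" for k
  define f' where "f' x = (if x \<in> {z<..<z'} then f x else 0)" for x
  have FX: "(F k has_integral X k) {z..z'}" for k
  proof -
    have "((\<lambda>x. (f x - g x) + g x) has_integral (B (\<beta> k) - B (\<alpha> k)) + integral {\<alpha> k..\<beta> k} g) {\<alpha> k..\<beta> k}"
      by (intro has_integral_add I integrable_integral gsub) (use ab[of k] in auto)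
    then have "(f has_integral X k) {\<alpha> k..\<beta> k}" unfolding X_def by simp
    then have "(F k has_integral X k) {\<alpha> k..\<beta> k}"
      by (rule has_integral_eq[rotated]) (simp add: F_def)
    then show ?thesis
      by (rule has_integral_on_superset) (use ab[of k] in \<open>auto simp: F_def\<close>)
  qed
  have mono: "F k x \<le> F (Suc k) x" if "x \<in> {z..z'}" for k x
  proof -
    have sub: "{\<alpha> k..\<beta> k} \<subseteq> {\<alpha> (Suc k)..\<beta> (Suc k)}"
      unfolding \<alpha>_def \<beta>_def using d_mono[of k] by auto
    show ?thesis
    proof (cases "x \<in> {\<alpha> k..\<beta> k}")
      case True then show ?thesis using sub unfolding F_def by auto
    next
      case False
      have "0 \<le> F (Suc k) x" unfolding F_def using f0 ab[of "Suc k"] by auto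
      moreover have "F k x = 0" using False unfolding F_def by auto
      ultimately show ?thesis by simp
    qed
  qed
  have alim: "\<alpha> \<longlonglongrightarrow> z" unfolding \<alpha>_def using tendsto_add[OF tendsto_const d_lim, of z] by simp
  have blim: "\<beta> \<longlonglongrightarrow> z'" unfolding \<beta>_def using tendsto_diff[OF tendsto_const d_lim, of z'] by simp
  have conv: "(\<lambda>k. F k x) \<longlonglongrightarrow> f' x" if "x \<in> {z..z'}" for x
  proof (cases "x \<in> {z<..<z'}")
    case True
    have "eventually (\<lambda>k. \<alpha> k < x) sequentially" using order_tendstoD(2)[OF alim] True by auto
    moreover have "eventually (\<lambda>k. x < \<beta> k) sequentially" using order_tendstoD(1)[OF blim] True by auto
    ultimately have "eventually (\<lambda>k. F k x = f' x) sequentially"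
      by eventually_elim (use True in \<open>auto simp: F_def f'_def\<close>)
    then show ?thesis by (rule tendsto_eventually)
  next
    case False
    then have "x = z \<or> x = z'" using that by auto
    then have "F k x = 0" for k unfolding F_def using ab[of k] by auto
    moreover have "f' x = 0" using False unfolding f'_def by auto
    ultimately show ?thesis by simp
  qed
  define G where "G t = integral {z..t} g" for t
  have cG: "continuous_on {z..z'} G" unfolding G_def by (rule indefinite_integral_continuous_1[OF gi])
  have intab: "integral {\<alpha> k..\<beta> k} g = G (\<beta> k) - G (\<alpha> k)" for k
  proof -
    have "integral {z..\<alpha> k} g + integral {\<alpha> k..\<beta> k} g = integral {z..\<beta> k} g"
      by (rule Henstock_Kurzweil_Integration.integral_combine) (use ab[of k] in \<open>auto intro: gsub\<close>)
    then show ?thesis unfolding G_def by simp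
  qed
  have in_ab: "\<alpha> k \<in> {z..z'}" "\<beta> k \<in> {z..z'}" for k using ab[of k] by auto
  have ev_in: "eventually (\<lambda>k. \<alpha> k \<in> {z..z'}) sequentially" "eventually (\<lambda>k. \<beta> k \<in> {z..z'}) sequentially"
    using in_ab by (auto intro!: always_eventually)
  have Ga: "(\<lambda>k. G (\<alpha> k)) \<longlonglongrightarrow> G z"
    by (rule continuous_on_tendsto_compose[OF cG alim]) (use zz' ev_in in auto)
  have Gb: "(\<lambda>k. G (\<beta> k)) \<longlonglongrightarrow> G z'"
    by (rule continuous_on_tendsto_compose[OF cG blim]) (use zz' ev_in in auto)
  have fa: "filterlim \<alpha> (at z) sequentially"
    unfolding filterlim_at using alim ab by (auto intro!: always_eventually dest: less_imp_neq[THEN not_sym])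
  have fb: "filterlim \<beta> (at z') sequentially"
    unfolding filterlim_at using blim ab by (auto intro!: always_eventually dest: less_imp_neq)
  have Ba: "(\<lambda>k. B (\<alpha> k)) \<longlonglongrightarrow> 0" using filterlim_compose[OF Bl fa] .
  have Bb: "(\<lambda>k. B (\<beta> k)) \<longlonglongrightarrow> 0" using filterlim_compose[OF Br fb] .
  have "X \<longlonglongrightarrow> 0 - 0 + (G z' - G z)"
    unfolding X_def intab by (intro tendsto_intros Ba Bb Ga Gb)
  moreover have "G z = 0" unfolding G_def by simp
  ultimately have Xlim: "X \<longlonglongrightarrow> integral {z..z'} g" unfolding G_def by simp
  have "(f' has_integral integral {z..z'} g) {z..z'}"
    by (rule has_integral_monotone_convergence_increasing[OF FX mono conv Xlim])
  moreover have "negligible {z, z'}" by simp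
  moreover have "\<And>x. x \<in> {z..z'} - {z, z'} \<Longrightarrow> f x = f' x" by (auto simp: f'_def)
  ultimately show ?thesis using has_integral_spike by blast
qed


context lmain
begin

lemma zz_lt: "zz n < zz (n + 1)" by (rule zz_strict_mono) simp

lemma absint_int: "(f::real\<Rightarrow>real) absolutely_integrable_on S \<Longrightarrow> f integrable_on S"
  by (simp add: absolutely_integrable_on_def)

lemma K0_int: "K0 integrable_on {c..d}"
  by (rule integrable_on_subinterval[OF absint_int[OF K0_absint]]) simp
lemma K2_int: "K2 integrable_on {c..d}"
  by (rule integrable_on_subinterval[OF absint_int[OF K2_absint]]) simp

lemma N0_nonneg: "0 \<le> N0 x" unfolding N0_def by simp

lemma N0_piece: "(N0 has_integral integral {zz n..zz (n + 1)} K0) {zz n..zz (n + 1)}"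
proof (rule piece_lim[OF zz_lt])
  fix \<alpha> \<beta> assume h: "zz n < \<alpha>" "\<alpha> \<le> \<beta>" "\<beta> < zz (n + 1)"
  show "((\<lambda>x. N0 x - K0 x) has_integral Bf \<beta> - Bf \<alpha>) {\<alpha>..\<beta>}"
  proof -
    have sub: "{\<alpha>..\<beta>} \<subseteq> {zz n<..<zz (n + 1)}" using h by auto
    show ?thesis by (rule acdD(2)[OF acd_B[OF p_piece] h(2) sub])
  qed
qed (auto intro: N0_nonneg K0_int B_lim p_zz)

lemma w2_piece: "((\<lambda>x. (w x)\<^sup>2) has_integral integral {zz n..zz (n + 1)} K2) {zz n..zz (n + 1)}"
proof (rule piece_lim[OF zz_lt])
  fix \<alpha> \<beta> assume h: "zz n < \<alpha>" "\<alpha> \<le> \<beta>" "\<beta> < zz (n + 1)"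
  show "((\<lambda>x. (w x)\<^sup>2 - K2 x) has_integral B2f \<beta> - B2f \<alpha>) {\<alpha>..\<beta>}"
  proof -
    have sub: "{\<alpha>..\<beta>} \<subseteq> {zz n<..<zz (n + 1)}" using h by auto
    show ?thesis by (rule acdD(2)[OF acd_B2[OF p_piece] h(2) sub])
  qed
qed (auto intro: K2_int B2_lim p_zz)

lemma zz_unbounded: "\<exists>N. \<forall>n\<ge>N. zz (- int n) \<le> x \<and> x \<le> zz (int n)"
proof -
  obtain N :: nat where N: "\<bar>x\<bar> * s + pi < real N * pi"
    using reals_Archimedean3[OF pi_gt_zero] by blast
  show ?thesis
  proof (intro exI[of _ N] allI impI)
    fix n assume n: "N \<le> n"
    have nN: "real N * pi \<le> real n * pi" using n by simp
    have s0: "0 \<le> s" using s_pos by simp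
    have xs: "x * s \<le> \<bar>x\<bar> * s" "(- x) * s \<le> \<bar>x\<bar> * s" "0 \<le> \<bar>x\<bar> * s"
      by (rule mult_right_mono[OF _ s0], simp)+ (simp add: s0)
    have "x * s \<le> real n * pi + pi / 2" using N nN xs pi_gt_zero by linarith
    then have "x \<le> (of_int (int n) * pi + pi / 2) / s" using s_pos by (simp add: field_simps)
    also have "\<dots> \<le> zz (int n)" by (rule zz_ge) simp
    finally have up: "x \<le> zz (int n)" .
    have n1: "N \<ge> 1"
    proof (rule ccontr)
      assume "\<not> N \<ge> 1" then have "N = 0" by simp
      then show False using N pi_gt_zero xs by simp
    qed
    have "zz (- int n) \<le> (of_int (- int n) * pi + pi / 2) / s" by (rule zz_le) (use n n1 in simp)
    also have "\<dots> \<le> x"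
    proof -
      have "- x * s \<le> real n * pi - pi / 2" using N nN xs pi_gt_zero by linarith
      then show ?thesis using s_pos by (simp add: field_simps)
    qed
    finally show "zz (- int n) \<le> x \<and> x \<le> zz (int n)" using up by simp
  qed
qed

lemma pieces_combine:
  fixes f g :: "real \<Rightarrow> real"
  assumes fp: "\<And>n. (f has_integral integral {zz n..zz (n + 1)} g) {zz n..zz (n + 1)}"
    and gi: "\<And>c d. g integrable_on {c..d}"
  shows "(f has_integral integral {zz j..zz (j + int i)} g) {zz j..zz (j + int i)}"
proof (induction i)
  case 0
  show ?case using has_integral_refl(1)[of f "zz j"] by simp
next
  case (Suc i)
  have le1: "zz j \<le> zz (j + int i)" and le2: "zz (j + int i) \<le> zz (j + int i + 1)"
    by (auto intro: zz_mono)
  have "(f has_integral integral {zz j..zz (j + int i)} g + integral {zz (j + int i)..zz (j + int i + 1)} g)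
      {zz j..zz (j + int i + 1)}"
    by (rule has_integral_combine[OF le1 le2 Suc.IH fp])
  moreover have "integral {zz j..zz (j + int i)} g + integral {zz (j + int i)..zz (j + int i + 1)} g
      = integral {zz j..zz (j + int i + 1)} g"
    by (rule Henstock_Kurzweil_Integration.integral_combine[OF le1 le2 gi])
  ultimately have "(f has_integral integral {zz j..zz (j + int i + 1)} g) {zz j..zz (j + int i + 1)}"
    by (simp add: add.assoc)
  moreover have "j + int (Suc i) = j + int i + 1" by simp
  ultimately show ?case by (simp only:)
qed

lemma global_from_pieces:
  fixes f g :: "real \<Rightarrow> real"
  assumes fp: "\<And>n. (f has_integral integral {zz n..zz (n + 1)} g) {zz n..zz (n + 1)}"
    and g: "g absolutely_integrable_on UNIV" and f0: "\<And>x. 0 \<le> f x"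
  shows "(f has_integral integral UNIV g) UNIV"
proof -
  have gi: "g integrable_on {c..d}" for c d
    by (rule integrable_on_subinterval[OF absint_int[OF g]]) simp
  define I where "I n = {zz (- int n)..zz (int n)}" for n :: nat
  have fI: "(f has_integral integral (I n) g) (I n)" for n
    using pieces_combine[OF fp gi, of "- int n" "2 * n"] unfolding I_def by simp
  define h where "h n x = (if x \<in> I n then f x else 0)" for n x
  define gn where "gn n x = (if x \<in> I n then g x else 0)" for n x
  have hI: "(h n has_integral integral (I n) g) UNIV" for n
    unfolding h_def using fI has_integral_restrict_UNIV by blast
  have Isub: "I n \<subseteq> I (Suc n)" for n unfolding I_def by (auto intro: order_trans[OF zz_mono] zz_mono)
  have mono: "h n x \<le> h (Suc n) x" for n x
    using Isub[of n] f0[of x] unfolding h_def by auto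
  have evin: "eventually (\<lambda>n. x \<in> I n) sequentially" for x
    using zz_unbounded[of x] unfolding I_def eventually_sequentially by auto
  have hconv: "(\<lambda>n. h n x) \<longlonglongrightarrow> f x" for x
    by (rule tendsto_eventually) (use evin[of x] in \<open>eventually_elim, simp add: h_def\<close>)
  have gconv: "(\<lambda>n. gn n x) \<longlonglongrightarrow> g x" for x
    by (rule tendsto_eventually) (use evin[of x] in \<open>eventually_elim, simp add: gn_def\<close>)
  have gni: "gn n integrable_on UNIV" for n
    unfolding gn_def integrable_restrict_UNIV I_def by (rule gi)
  have ng: "(\<lambda>x. norm (g x)) integrable_on UNIV" using g unfolding absolutely_integrable_on_def by simp
  have "(\<lambda>n. integral UNIV (gn n)) \<longlonglongrightarrow> integral UNIV g"
    by (rule dominated_convergence(2)[OF gni ng _ gconv]) (simp add: gn_def)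
  moreover have "integral UNIV (gn n) = integral (I n) g" for n
    unfolding gn_def by (rule integral_restrict_UNIV)
  ultimately have lim: "(\<lambda>n. integral (I n) g) \<longlonglongrightarrow> integral UNIV g" by simp
  show ?thesis
    by (rule has_integral_monotone_convergence_increasing[OF hI mono hconv lim])
qed

lemma N0_global: "(N0 has_integral integral UNIV K0) UNIV"
  by (rule global_from_pieces[OF N0_piece K0_absint N0_nonneg])

lemma w2_global: "((\<lambda>x. (w x)\<^sup>2) has_integral integral UNIV K2) UNIV"
  by (rule global_from_pieces[OF w2_piece K2_absint]) simp

end


context lmain
begin

lemma w_cont_all: "continuous_on UNIV w"
proof (intro continuous_at_imp_continuous_on ballI)
  fix x :: real
  show "isCont w x"
  proof (cases "p x = 0")
    case True then show ?thesis by (rule w_isCont_z)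
  next
    case False
    obtain n where n: "zz n \<le> x" "x < zz (n + 1)" using zz_cover by blast
    have "x \<noteq> zz n" using False p_zz by auto
    then have xS: "x \<in> {zz n<..<zz (n + 1)}" using n by auto
    have "continuous_on {zz n<..<zz (n + 1)} w" by (rule acd_cont[OF acd_w[OF p_piece]])
    then show "isCont w x" using xS continuous_on_interior by fastforce
  qed
qed

lemma N0_int: "N0 integrable_on UNIV" using N0_global by blast

lemma w1sq_int: "(\<lambda>x. (w1 x)\<^sup>2) integrable_on UNIV"
proof (rule absint_int, rule nonneg_bound_int[OF _ N0_int])
  fix x show "\<bar>(w1 x)\<^sup>2\<bar> \<le> N0 x" unfolding N0_def by simp
qed (auto)

lemma awp_int: "(\<lambda>x. (u0 E x * w x / p x)\<^sup>2) integrable_on UNIV"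
proof (rule absint_int, rule nonneg_bound_int)
  show "(\<lambda>x. N0 x / (2 * E\<^sup>2)) integrable_on UNIV" using N0_int by (rule integrable_on_divide)
  fix x
  have "2 * E\<^sup>2 * (u0 E x * w x / p x)\<^sup>2 \<le> N0 x" unfolding N0_def by simp
  then show "\<bar>(u0 E x * w x / p x)\<^sup>2\<bar> \<le> N0 x / (2 * E\<^sup>2)" using E0 by (simp add: field_simps)
qed auto

lemma w2_int: "(\<lambda>x. (w x)\<^sup>2) integrable_on UNIV" using w2_global by blast

lemma w1_absint: "w1 absolutely_integrable_on {c..d}"
  by (rule L2_absint[OF meas_w1 integrable_on_subinterval[OF w1sq_int]]) simp

lemma w1_int: "w1 integrable_on {c..d}" by (rule absint_int[OF w1_absint])

lemma w_closed_piece: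
  assumes h: "zz n \<le> \<alpha>" "\<alpha> \<le> \<beta>" "\<beta> \<le> zz (n + 1)"
  shows "(w1 has_integral w \<beta> - w \<alpha>) {\<alpha>..\<beta>}"
proof -
  define z where "z = zz n"
  define z' where "z' = zz (n + 1)"
  have zz': "z < z'" unfolding z_def z'_def by (rule zz_lt)
  define G where "G t = integral {z..t} w1" for t
  define D where "D t = w t - G t" for t
  define c0 where "c0 = (z + z') / 2"
  have c0: "c0 \<in> {z<..<z'}" unfolding c0_def using zz' by auto
  have cG: "continuous_on {z..z'} G" unfolding G_def by (rule indefinite_integral_continuous_1[OF w1_int])
  have cD: "continuous_on {z..z'} D" unfolding D_def[abs_def]
    by (intro continuous_intros cG continuous_on_subset[OF w_cont_all]) simp
  have acdS: "acd {z<..<z'} w w1" unfolding z_def z'_def by (rule acd_w[OF p_piece])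
  have Gdiff: "G t - G t' = integral {t'..t} w1" if "z \<le> t'" "t' \<le> t" for t t'
  proof -
    have "integral {z..t'} w1 + integral {t'..t} w1 = integral {z..t} w1"
      by (rule Henstock_Kurzweil_Integration.integral_combine[OF that w1_int])
    then show ?thesis unfolding G_def by simp
  qed
  have Dconst: "D t = D c0" if t: "t \<in> {z<..<z'}" for t
  proof (cases "t \<le> c0")
    case True
    have "(w1 has_integral w c0 - w t) {t..c0}"
      by (rule acdD(2)[OF acdS True]) (use t c0 in auto)
    then have "w c0 - w t = integral {t..c0} w1" by (simp add: integral_unique)
    also have "\<dots> = G c0 - G t" using Gdiff[of t c0] t True by simp
    finally show ?thesis unfolding D_def by simp
  next
    case False
    then have le: "c0 \<le> t" by simp
    have "(w1 has_integral w t - w c0) {c0..t}"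
      by (rule acdD(2)[OF acdS le]) (use t c0 in auto)
    then have "w t - w c0 = integral {c0..t} w1" by (simp add: integral_unique)
    also have "\<dots> = G t - G c0" using Gdiff[of c0 t] c0 le by simp
    finally show ?thesis unfolding D_def by simp
  qed
  have Dall: "D t = D c0" if "t \<in> {z..z'}" for t
    by (rule continuous_constant_on_closure[of "{z<..<z'}" D]) (use cD zz' Dconst that in auto)
  have hz: "z \<le> \<alpha>" "\<beta> \<le> z'" using h unfolding z_def z'_def by auto
  have "integral {\<alpha>..\<beta>} w1 = G \<beta> - G \<alpha>" using Gdiff[of \<alpha> \<beta>] hz h by simp
  also have "\<dots> = w \<beta> - w \<alpha>" using Dall[of \<alpha>] Dall[of \<beta>] hz h unfolding D_def by auto
  finally show ?thesis using w1_int has_integral_integral by metis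
qed

lemma w_H1_int: "a \<le> b \<Longrightarrow> (w1 has_integral w b - w a) {a..b}"
proof -
  have P: "\<forall>j \<alpha> \<beta>. zz j \<le> \<alpha> \<longrightarrow> \<alpha> \<le> \<beta> \<longrightarrow> \<beta> \<le> zz (j + int i + 1) \<longrightarrow> (w1 has_integral w \<beta> - w \<alpha>) {\<alpha>..\<beta>}"
    for i :: nat
  proof (induction i)
    case 0 then show ?case using w_closed_piece by simp
  next
    case (Suc i)
    show ?case
    proof (intro allI impI)
      fix j \<alpha> \<beta> assume h: "zz j \<le> \<alpha>" "\<alpha> \<le> \<beta>" "\<beta> \<le> zz (j + int (Suc i) + 1)"
      define \<gamma> where "\<gamma> = zz (j + int i + 1)"
      have e: "j + int (Suc i) + 1 = (j + int i + 1) + 1" by simp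
      show "(w1 has_integral w \<beta> - w \<alpha>) {\<alpha>..\<beta>}"
      proof (cases "\<beta> \<le> \<gamma>")
        case True then show ?thesis using Suc.IH h unfolding \<gamma>_def by blast
      next
        case False
        show ?thesis
        proof (cases "\<gamma> \<le> \<alpha>")
          case True
          show ?thesis by (rule w_closed_piece[of "j + int i + 1"]) (use h True e in \<open>auto simp: \<gamma>_def\<close>)
        next
          case False2: False
          have 1: "(w1 has_integral w \<gamma> - w \<alpha>) {\<alpha>..\<gamma>}" using Suc.IH h False2 unfolding \<gamma>_def by auto
          have 2: "(w1 has_integral w \<beta> - w \<gamma>) {\<gamma>..\<beta>}"
            by (rule w_closed_piece[of "j + int i + 1"]) (use h False e in \<open>auto simp: \<gamma>_def\<close>)
          have "(w1 has_integral (w \<gamma> - w \<alpha>) + (w \<beta> - w \<gamma>)) {\<alpha>..\<beta>}"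
            by (rule has_integral_combine[OF _ _ 1 2]) (use False False2 in auto)
          then show ?thesis by simp
        qed
      qed
    qed
  qed
  assume ab: "a \<le> b"
  obtain j where j: "zz j \<le> a" "a < zz (j + 1)" using zz_cover by blast
  obtain M where M: "zz M \<le> b" "b < zz (M + 1)" using zz_cover by blast
  have jM: "j \<le> M"
  proof (rule ccontr)
    assume "\<not> j \<le> M" then have "M + 1 \<le> j" by simp
    then have "zz (M + 1) \<le> zz j" by (rule zz_mono)
    then show False using j M ab by simp
  qed
  have "b \<le> zz (j + int (nat (M - j)) + 1)" using M jM by simp
  then show ?thesis using P[of "nat (M - j)"] j ab by blast
qed

lemma H1_w: "H1_with_deriv w w1"
  unfolding H1_with_deriv_def square_integrable_def meas_iff
  using w_cont_all w_H1_int w2_int w1sq_int by (auto intro: meas_w meas_w1)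

lemma sq_wp: "square_integrable (\<lambda>x. w x / p x)"
  unfolding square_integrable_def meas_iff
proof
  show "(\<lambda>x. w x / p x) \<in> borel_measurable lebesgue" by measurable
  define e0 where "e0 = E * (1 - E) / 2"
  have e0: "e0 > 0" unfolding e0_def using E0 E1 by simp
  have c1: "(1 - E) / 2 > 0" using E1 by simp
  show "(\<lambda>x. (w x / p x)\<^sup>2) integrable_on UNIV"
  proof (rule absint_int, rule nonneg_bound_int)
    show "(\<lambda>x. (w x)\<^sup>2 / e0 + (u0 E x * w x / p x)\<^sup>2 / ((1 - E) / 2)) integrable_on UNIV"
      by (intro integrable_add integrable_on_divide w2_int awp_int)
    fix x
    have "(w x / p x)\<^sup>2 \<le> (w x)\<^sup>2 / e0 + (u0 E x * w x / p x)\<^sup>2 / ((1 - E) / 2)"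
    proof (cases "(p x)\<^sup>2 < e0")
      case True
      have a2: "(u0 E x)\<^sup>2 \<ge> (1 - E) / 2" using u0_sq_large True unfolding e0_def by blast
      have "(w x / p x)\<^sup>2 * ((1 - E) / 2) \<le> (w x / p x)\<^sup>2 * (u0 E x)\<^sup>2"
        by (rule mult_left_mono[OF a2]) simp
      also have "\<dots> = (u0 E x * w x / p x)\<^sup>2" by (simp add: power_mult_distrib power_divide)
      finally have hh: "(w x / p x)\<^sup>2 * ((1 - E) / 2) \<le> (u0 E x * w x / p x)\<^sup>2" .
      have "(w x / p x)\<^sup>2 \<le> (u0 E x * w x / p x)\<^sup>2 / ((1 - E) / 2)"
        using pos_le_divide_eq[OF c1] hh by blast
      moreover have "0 \<le> (w x)\<^sup>2 / e0" using e0 by simp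
      ultimately show ?thesis by linarith
    next
      case False
      then have pe: "e0 \<le> (p x)\<^sup>2" by simp
      have "(w x / p x)\<^sup>2 = (w x)\<^sup>2 / (p x)\<^sup>2" by (simp add: power_divide)
      also have "\<dots> \<le> (w x)\<^sup>2 / e0" by (rule divide_left_mono[OF pe]) (use e0 pe in \<open>auto intro!: mult_pos_pos\<close>)
      finally show ?thesis using c1 by (smt (verit) divide_nonneg_pos zero_le_power2)
    qed
    then show "\<bar>(w x / p x)\<^sup>2\<bar> \<le> (w x)\<^sup>2 / e0 + (u0 E x * w x / p x)\<^sup>2 / ((1 - E) / 2)" by simp
  qed auto
qed

lemma final_identity:
  "Kplus_form E c u u1 u2 =
       integral UNIV (\<lambda>x. (w1 x)\<^sup>2) + (3 - c) * integral UNIV (\<lambda>x. (w x)\<^sup>2)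
       + 2 * E\<^sup>2 * integral UNIV (\<lambda>x. (u0 E x * w x / p x)\<^sup>2)"
proof -
  have kf: "Kplus_form E c u u1 u2 = integral UNIV K0 - c * integral UNIV K2"
    unfolding Kplus_form_def K0_def[abs_def] K2_def[abs_def] ..
  have i0: "integral UNIV K0 = integral UNIV N0" using integral_unique[OF N0_global] by simp
  have i2: "integral UNIV K2 = integral UNIV (\<lambda>x. (w x)\<^sup>2)" using integral_unique[OF w2_global] by simp
  have iN: "integral UNIV N0 = integral UNIV (\<lambda>x. (w1 x)\<^sup>2) + 3 * integral UNIV (\<lambda>x. (w x)\<^sup>2)
       + 2 * E\<^sup>2 * integral UNIV (\<lambda>x. (u0 E x * w x / p x)\<^sup>2)"
  proof -
    have "integral UNIV N0 = integral UNIV (\<lambda>x. (w1 x)\<^sup>2 + 3 * (w x)\<^sup>2) + integral UNIV (\<lambda>x. 2 * E\<^sup>2 * (u0 E x * w x / p x)\<^sup>2)"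
      unfolding N0_def[abs_def]
      by (intro integral_add integrable_add w1sq_int integrable_on_mult_right w2_int awp_int)
    also have "\<dots> = integral UNIV (\<lambda>x. (w1 x)\<^sup>2) + integral UNIV (\<lambda>x. 3 * (w x)\<^sup>2) + integral UNIV (\<lambda>x. 2 * E\<^sup>2 * (u0 E x * w x / p x)\<^sup>2)"
      by (subst integral_add) (auto intro: w1sq_int integrable_on_mult_right w2_int)
    also have "\<dots> = integral UNIV (\<lambda>x. (w1 x)\<^sup>2) + 3 * integral UNIV (\<lambda>x. (w x)\<^sup>2)
       + 2 * E\<^sup>2 * integral UNIV (\<lambda>x. (u0 E x * w x / p x)\<^sup>2)"
      by (simp add: integral_mult_right)
    finally show ?thesis .
  qed
  show ?thesis unfolding kf i0 i2 iN by (simp add: algebra_simps)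
qed

end


theorem lemma4p2:
  fixes E c :: real and u u1 u2 :: "real \<Rightarrow> real"
  assumes "0 < E" and "E < 1"
    and "H2_with_derivs u u1 u2"
    and "\<forall>x. deriv (u0 E) x = 0 \<longrightarrow> u x = 0"
  shows "\<exists>w w1.
     (\<forall>x. deriv (u0 E) x \<noteq> 0 \<longrightarrow>
            w x = u1 x - deriv (deriv (u0 E)) x / deriv (u0 E) x * u x)
   \<and> H1_with_deriv w w1
   \<and> square_integrable (\<lambda>x. w x / deriv (u0 E) x)
   \<and> Kplus_form E c u u1 u2 =
       integral UNIV (\<lambda>x. (w1 x)\<^sup>2) + (3 - c) * integral UNIV (\<lambda>x. (w x)\<^sup>2)
       + 2 * E\<^sup>2 * integral UNIV (\<lambda>x. (u0 E x * w x / deriv (u0 E) x)\<^sup>2)"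
proof -
  interpret ell E by unfold_locales (use assms(1,2) in auto)
  have uz': "\<And>x. p x = 0 \<Longrightarrow> u x = 0" using assms(4) deriv_u0 by auto
  interpret lmain E u u1 u2 by unfold_locales (use assms(3) uz' in auto)
  have dd: "deriv (deriv (u0 E)) = pp" using deriv_u0 deriv_p by simp
  have g1: "\<forall>x. deriv (u0 E) x \<noteq> 0 \<longrightarrow> w x = u1 x - deriv (deriv (u0 E)) x / deriv (u0 E) x * u x"
  proof (intro allI impI)
    fix x assume "deriv (u0 E) x \<noteq> 0"
    then have px: "p x \<noteq> 0" using deriv_u0 by simp
    show "w x = u1 x - deriv (deriv (u0 E)) x / deriv (u0 E) x * u x"
      unfolding deriv_u0 deriv_p w_def q_def using px by simp
  qed
  have g2: "H1_with_deriv w w1" by (rule H1_w)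
  have g3: "square_integrable (\<lambda>x. w x / deriv (u0 E) x)" unfolding deriv_u0 by (rule sq_wp)
  have g4: "Kplus_form E c u u1 u2 =
       integral UNIV (\<lambda>x. (w1 x)\<^sup>2) + (3 - c) * integral UNIV (\<lambda>x. (w x)\<^sup>2)
       + 2 * E\<^sup>2 * integral UNIV (\<lambda>x. (u0 E x * w x / deriv (u0 E) x)\<^sup>2)"
    unfolding deriv_u0 by (rule final_identity)
  show ?thesis using g1 g2 g3 g4 by blast
qed


end
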